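(* Let $1<p<\infty$, $0<\theta<1$, $1\le r<\infty$, and $t_k=2^{1-2^k}$ for $k\in\{0,1,2,\dots\}$. Then for all $f\in\bigl(L^{p)}(\Omega),L^{(p}(\Omega)\bigr)_{\theta,r}$, $$\|f\|^r_{(L^{p)},L^{(p})_{\theta,r}}\approx\sum_{k=0}^{\infty}2^{kr(\theta-\frac1p)}\Bigl(\int_{t_{k+1}}^{t_k}f_*^p(y)dy\Bigr)^{r/p},$$ with constants independent of $f$.
   Context: $\Omega\subset\mathbb R^n$ is a bounded open set with $|\Omega|=1$; $f_*$ is the decreasing rearrangement of $|f|$ on $(0,1)$; $\log$ is the natural logarithm. Grand Lebesgue space $L^{p)}(\Omega)$: measurable $f$ with $\|f\|_{p)}=\sup_{0<t<1}(1-\log t)^{-1/p}(\int_t^1 f_*^p)^{1/p}<\infty$. Small Lebesgue space $L^{(p}(\Omega)$: measurable $f$ with $\|f\|_{(p}=\int_0^1(1-\log t)^{-1/p}(\int_0^t f_*^p)^{1/p}\frac{dt}{t}<\infty$. K-functional: $K(g,t;X_0,X_1)=\inf_{g=g_0+g_1}(\|g_0\|_{X_0}+t\|g_1\|_{X_1})$; $(X_0,X_1)_{\theta,r}$ is the set of $g\in X_0+X_1$ with $\|g\|=\bigl(\int_0^1[t^{-\theta}K(g,t)]^r\frac{dt}{t}\bigr)^{1/r}<\infty$ (only $t\in(0,1)$ used). *)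

theory Defs
  imports "HOL-Analysis.Analysis"
begin

text \<open>Real power of an extended nonnegative real (exponent meant to be positive);
  the value \<infinity> is mapped to \<infinity>.\<close>
definition enn_powr :: "ennreal \<Rightarrow> real \<Rightarrow> ennreal" where
  "enn_powr x a = (if x = \<infinity> then \<infinity> else ennreal (enn2real x powr a))"

text \<open>Decreasing rearrangement of |f| on \<Omega> (with |\<Omega>| = 1), as a function on (0,1).\<close>
definition dec_rearr :: "'a::euclidean_space set \<Rightarrow> ('a \<Rightarrow> real) \<Rightarrow> real \<Rightarrow> real" where
  "dec_rearr \<Omega> f s = Inf {y::real. 0 \<le> y \<and> measure lebesgue {x\<in>\<Omega>. \<bar>f x\<bar> > y} \<le> s}"

definition grand_norm :: "'a::euclidean_space set \<Rightarrow> real \<Rightarrow> ('a \<Rightarrow> real) \<Rightarrow> ennreal" where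
  "grand_norm \<Omega> p f = (SUP t\<in>{0<..<1::real}.
      ennreal ((1 - ln t) powr (-1/p)) *
      enn_powr (\<integral>\<^sup>+ s\<in>{t..1}. ennreal (dec_rearr \<Omega> f s powr p) \<partial>lborel) (1/p))"

definition small_norm :: "'a::euclidean_space set \<Rightarrow> real \<Rightarrow> ('a \<Rightarrow> real) \<Rightarrow> ennreal" where
  "small_norm \<Omega> p f = (\<integral>\<^sup>+ t\<in>{0<..<1::real}.
      ennreal ((1 - ln t) powr (-1/p)) *
      enn_powr (\<integral>\<^sup>+ s\<in>{0<..t}. ennreal (dec_rearr \<Omega> f s powr p) \<partial>lborel) (1/p)
      * ennreal (1 / t) \<partial>lborel)"

definition grand_space :: "'a::euclidean_space set \<Rightarrow> real \<Rightarrow> ('a \<Rightarrow> real) set" where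
  "grand_space \<Omega> p = {f. f \<in> borel_measurable (lebesgue_on \<Omega>) \<and> grand_norm \<Omega> p f < \<infinity>}"

definition small_space :: "'a::euclidean_space set \<Rightarrow> real \<Rightarrow> ('a \<Rightarrow> real) set" where
  "small_space \<Omega> p = {f. f \<in> borel_measurable (lebesgue_on \<Omega>) \<and> small_norm \<Omega> p f < \<infinity>}"

definition K_fun :: "'a::euclidean_space set \<Rightarrow> real \<Rightarrow> ('a \<Rightarrow> real) \<Rightarrow> real \<Rightarrow> ennreal" where
  "K_fun \<Omega> p g t = (INF gs \<in> {(g0, g1). g0 \<in> grand_space \<Omega> p \<and> g1 \<in> small_space \<Omega> p \<and>
        (\<forall>x\<in>\<Omega>. g x = g0 x + g1 x)}.
      grand_norm \<Omega> p (fst gs) + ennreal t * small_norm \<Omega> p (snd gs))"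

definition sum_space :: "'a::euclidean_space set \<Rightarrow> real \<Rightarrow> ('a \<Rightarrow> real) set" where
  "sum_space \<Omega> p = {g. \<exists>g0 g1. g0 \<in> grand_space \<Omega> p \<and> g1 \<in> small_space \<Omega> p \<and>
        (\<forall>x\<in>\<Omega>. g x = g0 x + g1 x)}"

text \<open>Interpolation norm (only t in (0,1) used).\<close>
definition interp_norm :: "'a::euclidean_space set \<Rightarrow> real \<Rightarrow> real \<Rightarrow> real \<Rightarrow> ('a \<Rightarrow> real) \<Rightarrow> ennreal" where
  "interp_norm \<Omega> p \<theta> r g = enn_powr (\<integral>\<^sup>+ t\<in>{0<..<1::real}.
      enn_powr (ennreal (t powr (-\<theta>)) * K_fun \<Omega> p g t) r * ennreal (1 / t) \<partial>lborel) (1/r)"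

definition interp_space :: "'a::euclidean_space set \<Rightarrow> real \<Rightarrow> real \<Rightarrow> real \<Rightarrow> ('a \<Rightarrow> real) set" where
  "interp_space \<Omega> p \<theta> r = {g \<in> sum_space \<Omega> p. interp_norm \<Omega> p \<theta> r g < \<infinity>}"

end

theory Submission
  imports Defs
begin

definition mu :: "'a::euclidean_space set \<Rightarrow> ('a \<Rightarrow> real) \<Rightarrow> real \<Rightarrow> real" where
  "mu \<Omega> f y = measure lebesgue {x\<in>\<Omega>. y < \<bar>f x\<bar>}"

lemma set_meas:
  fixes f :: "'a::euclidean_space \<Rightarrow> real"
  assumes "\<Omega> \<in> sets lebesgue" and [measurable]: "f \<in> borel_measurable (lebesgue_on \<Omega>)"
  shows "{x\<in>\<Omega>. y < \<bar>f x\<bar>} \<in> sets lebesgue"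
proof -
  have "{x\<in>space (lebesgue_on \<Omega>). y < \<bar>f x\<bar>} \<in> sets (lebesgue_on \<Omega>)"
    using assms(2) by measurable
  then show ?thesis using assms(1) by (simp add: sets_restrict_space_iff)
qed

context
  fixes \<Omega> :: "'a::euclidean_space set"
  assumes OmS: "\<Omega> \<in> sets lebesgue" and Om1: "emeasure lebesgue \<Omega> = 1"
begin

lemma sub_fmeas: "A \<in> sets lebesgue \<Longrightarrow> A \<subseteq> \<Omega> \<Longrightarrow> A \<in> fmeasurable lebesgue"
proof -
  assume a: "A \<in> sets lebesgue" "A \<subseteq> \<Omega>"
  have "emeasure lebesgue A \<le> 1" using emeasure_mono[OF a(2) OmS] Om1 by simp
  also have "(1::ennreal) < \<infinity>" by simp
  finally show ?thesis using a by (simp add: fmeasurable_def)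
qed

lemma sub_meas_le1: "A \<in> sets lebesgue \<Longrightarrow> A \<subseteq> \<Omega> \<Longrightarrow> measure lebesgue A \<le> 1"
proof -
  assume a: "A \<in> sets lebesgue" "A \<subseteq> \<Omega>"
  have "measure lebesgue A \<le> measure lebesgue \<Omega>"
    by (rule measure_mono_fmeasurable[OF a(2) a(1) sub_fmeas[OF OmS]]) simp
  also have "measure lebesgue \<Omega> = 1" using Om1 by (simp add: measure_def)
  finally show ?thesis .
qed

lemma mu_nonneg: "0 \<le> mu \<Omega> f y" by (simp add: mu_def)

lemma mu_le1:
  fixes f :: "'a \<Rightarrow> real"
  assumes "f \<in> borel_measurable (lebesgue_on \<Omega>)"
  shows "mu \<Omega> f y \<le> 1"
  unfolding mu_def by (rule sub_meas_le1[OF set_meas[OF OmS assms]]) auto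

lemma mu_mono_sets:
  fixes f g :: "'a \<Rightarrow> real"
  assumes "f \<in> borel_measurable (lebesgue_on \<Omega>)" "g \<in> borel_measurable (lebesgue_on \<Omega>)"
    and "{x\<in>\<Omega>. z < \<bar>g x\<bar>} \<subseteq> {x\<in>\<Omega>. y < \<bar>f x\<bar>}"
  shows "mu \<Omega> g z \<le> mu \<Omega> f y"
  unfolding mu_def
  by (rule measure_mono_fmeasurable[OF assms(3) set_meas[OF OmS assms(2)]
        sub_fmeas[OF set_meas[OF OmS assms(1)]]]) auto

lemma mu_antimono:
  fixes f :: "'a \<Rightarrow> real"
  assumes "f \<in> borel_measurable (lebesgue_on \<Omega>)" "y1 \<le> y2"
  shows "mu \<Omega> f y2 \<le> mu \<Omega> f y1"
  by (rule mu_mono_sets[OF assms(1) assms(1)]) (use assms(2) in auto)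

lemma mu_small:
  fixes f :: "'a \<Rightarrow> real"
  assumes fm: "f \<in> borel_measurable (lebesgue_on \<Omega>)" and s: "0 < s"
  shows "\<exists>y\<ge>0. mu \<Omega> f y \<le> s"
proof -
  define A where "A n = {x\<in>\<Omega>. real n < \<bar>f x\<bar>}" for n :: nat
  have AS: "range A \<subseteq> sets lebesgue" using set_meas[OF OmS fm] by (auto simp: A_def)
  have dA: "decseq A" unfolding A_def decseq_def by auto
  have fin: "emeasure lebesgue (A i) \<noteq> \<infinity>" for i
    using sub_fmeas[of "A i"] AS by (auto simp: A_def fmeasurable_def)
  have "(\<Inter>i. A i) = {}"
  proof safe
    fix x assume "x \<in> (\<Inter>i. A i)"
    then have "\<forall>n::nat. real n < \<bar>f x\<bar>" by (auto simp: A_def)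
    moreover obtain n :: nat where "\<bar>f x\<bar> < real n" using reals_Archimedean2 by blast
    ultimately show "x \<in> {}" by (meson order.asym)
  qed
  then have "(\<lambda>n. measure lebesgue (A n)) \<longlonglongrightarrow> 0"
    using Lim_measure_decseq[OF AS dA fin] by simp
  then obtain n where "measure lebesgue (A n) < s"
    using order_tendstoD(2)[OF _ s] eventually_sequentially by (metis order.refl)
  then show ?thesis by (intro exI[of _ "real n"]) (auto simp: mu_def A_def)
qed

definition Yset :: "('a \<Rightarrow> real) \<Rightarrow> real \<Rightarrow> real set" where
  "Yset f s = {y. 0 \<le> y \<and> mu \<Omega> f y \<le> s}"

lemma dec_eq: "dec_rearr \<Omega> f s = Inf (Yset f s)"
  unfolding dec_rearr_def Yset_def mu_def by simp

lemma dec_nonneg: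
  fixes f :: "'a \<Rightarrow> real"
  assumes fm: "f \<in> borel_measurable (lebesgue_on \<Omega>)" and s: "0 < s"
  shows "0 \<le> dec_rearr \<Omega> f s"
  unfolding dec_eq using mu_small[OF fm s] by (intro cInf_greatest) (auto simp: Yset_def)

lemma dec_le:
  fixes f :: "'a \<Rightarrow> real"
  assumes "0 \<le> y" "mu \<Omega> f y \<le> s"
  shows "dec_rearr \<Omega> f s \<le> y"
  unfolding dec_eq by (rule cInf_lower) (use assms in \<open>auto simp: Yset_def bdd_below_def\<close>)

lemma dec_attain:
  fixes f :: "'a \<Rightarrow> real"
  assumes fm: "f \<in> borel_measurable (lebesgue_on \<Omega>)" and s: "0 < s"
  shows "mu \<Omega> f (dec_rearr \<Omega> f s) \<le> s"
proof -
  define F where "F = dec_rearr \<Omega> f s"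
  have ne: "Yset f s \<noteq> {}" using mu_small[OF fm s] by (auto simp: Yset_def)
  have bdd: "bdd_below (Yset f s)" by (auto simp: Yset_def bdd_below_def)
  have le: "mu \<Omega> f (F + 1 / (Suc n)) \<le> s" for n
  proof -
    have "Inf (Yset f s) < F + 1 / Suc n" unfolding F_def dec_eq by simp
    then obtain y where y: "y \<in> Yset f s" "y < F + 1 / Suc n"
      using cInf_lessD[OF ne] by blast
    then have "mu \<Omega> f (F + 1 / Suc n) \<le> mu \<Omega> f y" by (intro mu_antimono[OF fm]) auto
    with y show ?thesis by (auto simp: Yset_def)
  qed
  define A where "A n = {x\<in>\<Omega>. F + 1 / Suc n < \<bar>f x\<bar>}" for n :: nat
  have AS: "range A \<subseteq> sets lebesgue" using set_meas[OF OmS fm] by (auto simp: A_def)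
  have iA: "incseq A" unfolding A_def incseq_def
  proof (clarsimp)
    fix m n x assume "m \<le> n" "F + 1 / (1 + real m) < \<bar>f x\<bar>"
    moreover have "1 / (1 + real n) \<le> 1 / (1 + real m)" using \<open>m \<le> n\<close>
      by (intro divide_left_mono) auto
    ultimately show "F + 1 / (1 + real n) < \<bar>f x\<bar>" by linarith
  qed
  have U: "(\<Union>i. A i) = {x\<in>\<Omega>. F < \<bar>f x\<bar>}"
  proof safe
    fix x i assume xi: "x \<in> A i"
    then show "x \<in> \<Omega>" by (simp add: A_def)
    from xi have "F + 1 / (1 + real i) < \<bar>f x\<bar>" by (simp add: A_def)
    moreover have "0 < 1 / (1 + real i)" by simp
    ultimately show "F < \<bar>f x\<bar>" by linarith
  next
    fix x assume x: "x \<in> \<Omega>" "F < \<bar>f x\<bar>"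
    then obtain n :: nat where "1 / Suc n < \<bar>f x\<bar> - F"
      using reals_Archimedean[of "\<bar>f x\<bar> - F"] by (auto simp: inverse_eq_divide)
    then have "F + 1 / Suc n < \<bar>f x\<bar>" by linarith
    then show "x \<in> (\<Union>i. A i)" using x unfolding A_def by blast
  qed
  have fin: "emeasure lebesgue (\<Union>i. A i) \<noteq> \<infinity>"
    using sub_fmeas[of "\<Union>i. A i"] AS U set_meas[OF OmS fm] by (auto simp: fmeasurable_def)
  have "(\<lambda>n. measure lebesgue (A n)) \<longlonglongrightarrow> measure lebesgue (\<Union>i. A i)"
    by (rule Lim_measure_incseq[OF AS iA fin])
  moreover have "measure lebesgue (A n) \<le> s" for n using le[of n] by (simp add: A_def mu_def)
  ultimately have "measure lebesgue (\<Union>i. A i) \<le> s" by (intro LIMSEQ_le_const2) auto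
  then show ?thesis by (simp add: U mu_def F_def)
qed

lemma dec_antimono:
  fixes f :: "'a \<Rightarrow> real"
  assumes fm: "f \<in> borel_measurable (lebesgue_on \<Omega>)" and s: "0 < s1" "s1 \<le> s2"
  shows "dec_rearr \<Omega> f s2 \<le> dec_rearr \<Omega> f s1"
  using dec_attain[OF fm s(1)] dec_nonneg[OF fm s(1)] s(2) by (intro dec_le) auto

lemma dec_dom:
  fixes f g :: "'a \<Rightarrow> real"
  assumes fm: "f \<in> borel_measurable (lebesgue_on \<Omega>)" and gm: "g \<in> borel_measurable (lebesgue_on \<Omega>)"
    and le: "\<And>x. x \<in> \<Omega> \<Longrightarrow> \<bar>g x\<bar> \<le> \<bar>f x\<bar>" and s: "0 < s"
  shows "dec_rearr \<Omega> g s \<le> dec_rearr \<Omega> f s"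
proof (rule dec_le)
  show "0 \<le> dec_rearr \<Omega> f s" by (rule dec_nonneg[OF fm s])
  have "mu \<Omega> g (dec_rearr \<Omega> f s) \<le> mu \<Omega> f (dec_rearr \<Omega> f s)"
    by (rule mu_mono_sets[OF fm gm]) (use le in fastforce)
  then show "mu \<Omega> g (dec_rearr \<Omega> f s) \<le> s" using dec_attain[OF fm s] by simp
qed

lemma dec_bound:
  fixes g :: "'a \<Rightarrow> real"
  assumes le: "\<And>x. x \<in> \<Omega> \<Longrightarrow> \<bar>g x\<bar> \<le> l" and l: "0 \<le> l" and s: "0 \<le> s"
  shows "dec_rearr \<Omega> g s \<le> l"
proof (rule dec_le)
  have e: "{x\<in>\<Omega>. l < \<bar>g x\<bar>} = {}" using le by force
  show "mu \<Omega> g l \<le> s" unfolding mu_def e using s by simp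
qed (rule l)

lemma dec_zero:
  fixes f g :: "'a \<Rightarrow> real"
  assumes fm: "f \<in> borel_measurable (lebesgue_on \<Omega>)" and gm: "g \<in> borel_measurable (lebesgue_on \<Omega>)"
    and sub: "\<And>x. x \<in> \<Omega> \<Longrightarrow> g x \<noteq> 0 \<Longrightarrow> l < \<bar>f x\<bar>" and mul: "mu \<Omega> f l \<le> s"
  shows "dec_rearr \<Omega> g s \<le> 0"
proof (rule dec_le)
  have "mu \<Omega> g 0 \<le> mu \<Omega> f l" by (rule mu_mono_sets[OF fm gm]) (use sub in force)
  then show "mu \<Omega> g 0 \<le> s" using mul by simp
qed simp

lemma dec_sum:
  fixes f g0 g1 :: "'a \<Rightarrow> real"
  assumes fm: "f \<in> borel_measurable (lebesgue_on \<Omega>)"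
    and g0m: "g0 \<in> borel_measurable (lebesgue_on \<Omega>)" and g1m: "g1 \<in> borel_measurable (lebesgue_on \<Omega>)"
    and eq: "\<And>x. x \<in> \<Omega> \<Longrightarrow> f x = g0 x + g1 x" and s: "0 < s"
  shows "dec_rearr \<Omega> f s \<le> dec_rearr \<Omega> g0 (s/2) + dec_rearr \<Omega> g1 (s/2)"
proof (rule dec_le)
  define a where "a = dec_rearr \<Omega> g0 (s/2)"
  define b where "b = dec_rearr \<Omega> g1 (s/2)"
  have s2: "0 < s/2" using s by simp
  show "0 \<le> a + b" using dec_nonneg[OF g0m s2] dec_nonneg[OF g1m s2] by (simp add: a_def b_def)
  have sub: "{x\<in>\<Omega>. a + b < \<bar>f x\<bar>} \<subseteq> {x\<in>\<Omega>. a < \<bar>g0 x\<bar>} \<union> {x\<in>\<Omega>. b < \<bar>g1 x\<bar>}"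
    using eq by force
  have "mu \<Omega> f (a + b) \<le> measure lebesgue ({x\<in>\<Omega>. a < \<bar>g0 x\<bar>} \<union> {x\<in>\<Omega>. b < \<bar>g1 x\<bar>})"
    unfolding mu_def
    by (rule measure_mono_fmeasurable[OF sub set_meas[OF OmS fm]])
      (intro sub_fmeas sets.Un set_meas[OF OmS g0m] set_meas[OF OmS g1m]; auto)
  also have "\<dots> \<le> mu \<Omega> g0 a + mu \<Omega> g1 b" unfolding mu_def
    by (rule measure_Un_le) (intro sub_fmeas set_meas[OF OmS g0m] set_meas[OF OmS g1m]; auto)+
  also have "\<dots> \<le> s/2 + s/2" using dec_attain[OF g0m s2] dec_attain[OF g1m s2]
    by (simp add: a_def b_def)
  finally show "mu \<Omega> f (a + b) \<le> s" by simp
qed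

end

lemma enn_powr_ennreal: "0 \<le> x \<Longrightarrow> enn_powr (ennreal x) a = ennreal (x powr a)"
  by (simp add: enn_powr_def)

lemma enn_powr_top[simp]: "enn_powr top a = top"
  by (simp add: enn_powr_def)

lemma enn_powr_cases:
  obtains (top) "x = top" | (fin) y where "x = ennreal y" "0 \<le> y"
  by (cases x rule: ennreal_cases) auto

lemma enn_powr_mono:
  assumes "0 < a" "x \<le> y"
  shows "enn_powr x a \<le> enn_powr y a"
proof (cases y rule: enn_powr_cases)
  case top then show ?thesis by simp
next
  case (fin v)
  then obtain u where u: "x = ennreal u" "0 \<le> u" "u \<le> v"
    using assms(2) by (cases x rule: enn_powr_cases) (auto simp: top_unique)
  then show ?thesis using fin assms
    by (simp add: enn_powr_ennreal powr_mono2 ennreal_leI)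
qed

lemma enn_powr_zero[simp]: "0 < a \<Longrightarrow> enn_powr 0 a = 0"
  using enn_powr_ennreal[of 0 a] by simp

lemma enn_powr_mult:
  assumes "0 < a"
  shows "enn_powr (x * y) a = enn_powr x a * enn_powr y a"
proof (cases x rule: enn_powr_cases)
  case top
  show ?thesis
  proof (cases y rule: enn_powr_cases)
    case (fin v) then show ?thesis using top assms
      by (cases "v = 0") (auto simp: enn_powr_ennreal ennreal_mult_top ennreal_top_mult)
  qed (use top in simp)
next
  case (fin u)
  show ?thesis
  proof (cases y rule: enn_powr_cases)
    case top then show ?thesis using fin assms
      by (cases "u = 0") (auto simp: enn_powr_ennreal ennreal_mult_top ennreal_top_mult)
  next
    case fin2: (fin v) then show ?thesis using fin
      by (simp add: enn_powr_ennreal ennreal_mult[symmetric] powr_mult)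
  qed
qed

lemma enn_powr_powr:
  assumes "0 < a" "0 < b"
  shows "enn_powr (enn_powr x a) b = enn_powr x (a * b)"
  by (cases x rule: enn_powr_cases) (use assms in \<open>simp_all add: enn_powr_ennreal powr_powr\<close>)

lemma enn_powr_one[simp]: "enn_powr x 1 = x"
  by (cases x rule: enn_powr_cases) (auto simp: enn_powr_ennreal)

lemma enn_powr_inv:
  assumes "0 < r"
  shows "enn_powr (enn_powr x (1/r)) r = x"
  using enn_powr_powr[of "1/r" r x] assms by simp


lemma powr_add_le2:
  fixes x y p :: real
  assumes "0 \<le> x" "0 \<le> y" "0 < p"
  shows "(x + y) powr p \<le> 2 powr p * (x powr p + y powr p)"
proof -
  have "(x + y) powr p \<le> (2 * max x y) powr p"
    using assms by (intro powr_mono2) auto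
  also have "\<dots> = 2 powr p * max x y powr p" using assms by (simp add: powr_mult)
  also have "max x y powr p \<le> x powr p + y powr p"
    by (cases "x \<le> y") (auto simp: max_def)
  finally show ?thesis by (simp add: mult_left_mono)
qed

lemma powr_add_subadd:
  fixes x y q :: real
  assumes "0 \<le> x" "0 \<le> y" "0 < q" "q \<le> 1"
  shows "(x + y) powr q \<le> x powr q + y powr q"
proof (cases "x + y = 0")
  case True then show ?thesis using assms by simp
next
  case False
  then have s: "0 < x + y" using assms by simp
  have a: "u \<le> u powr q" if "0 \<le> u" "u \<le> 1" for u :: real
  proof (cases "u = 0")
    case False
    then have "u powr 1 \<le> u powr q" using that assms by (intro powr_mono') auto
    then show ?thesis using False that by simp
  qed simp
  have "1 = x / (x + y) + y / (x + y)" using s by (simp add: add_divide_distrib[symmetric])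
  also have "\<dots> \<le> (x / (x + y)) powr q + (y / (x + y)) powr q"
    using assms s by (intro add_mono a) auto
  also have "\<dots> = (x powr q + y powr q) / (x + y) powr q"
    by (simp add: powr_divide add_divide_distrib)
  finally show ?thesis using s by (simp add: le_divide_eq)
qed

lemma powr_sum_subadd:
  fixes q :: real and A :: "'b set"
  assumes "\<And>i. i \<in> A \<Longrightarrow> 0 \<le> g i" "0 < q" "q \<le> 1"
  shows "(\<Sum>i\<in>A. g i) powr q \<le> (\<Sum>i\<in>A. g i powr q)"
  using assms(1)
proof (induction A rule: infinite_finite_induct)
  case (insert a A)
  have "(\<Sum>i\<in>insert a A. g i) powr q = (g a + (\<Sum>i\<in>A. g i)) powr q" using insert by simp
  also have "\<dots> \<le> g a powr q + (\<Sum>i\<in>A. g i) powr q"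
    using insert assms by (intro powr_add_subadd sum_nonneg) auto
  also have "\<dots> \<le> g a powr q + (\<Sum>i\<in>A. g i powr q)" using insert by auto
  finally show ?case using insert by simp
qed (use assms in auto)


definition tt :: "nat \<Rightarrow> real" where "tt k = 2 powr (1 - 2 ^ k)"

lemma tt_pos: "0 < tt k" by (simp add: tt_def)

lemma tt_0[simp]: "tt 0 = 1" by (simp add: tt_def)

lemma ln_tt: "ln (tt k) = (1 - 2 ^ k) * ln 2"
  by (simp add: tt_def ln_powr)

lemma tt_Suc: "tt (Suc k) = tt k ^ 2 / 2"
proof -
  have "tt k ^ 2 / 2 = exp ((1 - 2^k) * ln 2) * exp ((1 - 2^k) * ln 2) / exp (ln 2)"
    by (simp add: tt_def powr_def power2_eq_square)
  also have "\<dots> = exp ((1 - 2^k) * ln 2 + (1 - 2^k) * ln 2 - ln 2)" by (metis exp_add exp_diff)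
  also have "\<dots> = tt (Suc k)" by (simp add: tt_def powr_def algebra_simps)
  finally show ?thesis by simp
qed

lemma tt_le1: "tt k \<le> 1"
proof -
  have "tt k \<le> 2 powr 0" unfolding tt_def by (rule powr_mono) auto
  then show ?thesis by simp
qed

lemma tt_half: "tt (Suc k) \<le> tt k / 2"
proof -
  have "tt k ^ 2 \<le> tt k" using tt_le1[of k] tt_pos[of k] by (simp add: power2_eq_square mult_le_cancel_right1)
  then show ?thesis by (simp add: tt_Suc)
qed

lemma tt_antimono: "j \<le> k \<Longrightarrow> tt k \<le> tt j"
proof (induction k)
  case (Suc k)
  then show ?case using tt_half[of k] tt_pos[of k]
    by (cases "j = Suc k") auto
qed simp

lemma tt_le_pow: "tt k \<le> (1/2) ^ k"
proof (induction k)
  case (Suc k) then show ?case using tt_half[of k] by simp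
qed simp

lemma tt_cover:
  assumes "0 < \<tau>" "\<tau> \<le> tt k"
  shows "\<exists>i\<ge>k. tt (Suc i) \<le> \<tau> \<and> \<tau> \<le> tt i \<and> (\<forall>j\<ge>k. tt (Suc j) \<le> \<tau> \<longrightarrow> i \<le> j)"
proof -
  obtain n where n: "(1/2::real) ^ n < \<tau>" using real_arch_pow_inv[of \<tau> "1/2"] assms by auto
  define P where "P j \<longleftrightarrow> k \<le> j \<and> tt (Suc j) \<le> \<tau>" for j
  have "tt (Suc (max k n)) \<le> (1/2) ^ n"
    using tt_le_pow[of "Suc (max k n)"] power_decreasing[of n "Suc (max k n)" "1/2::real"]
    by (meson le_SucI max.cobounded2 order.trans divide_nonneg_nonneg zero_le_one one_le_numeral
      divide_le_eq_1 zero_less_numeral)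
  then have Pn: "P (max k n)" using n by (simp add: P_def)
  define i where "i = (LEAST j. P j)"
  have Pi: "P i" unfolding i_def by (rule LeastI[of P, OF Pn])
  have min: "\<And>j. P j \<Longrightarrow> i \<le> j" unfolding i_def by (rule Least_le)
  have "\<tau> \<le> tt i"
  proof (cases "i = k")
    case False
    then obtain i' where i': "i = Suc i'" "k \<le> i'" using Pi by (cases i) (auto simp: P_def)
    then have "\<not> P i'" using min[of i'] by auto
    then show ?thesis using i' by (auto simp: P_def)
  qed (use assms in simp)
  then show ?thesis using Pi min by (auto simp: P_def intro!: exI[of _ i])
qed

lemma dyad_cover:
  assumes "0 < \<tau>" "\<tau> < 1"
  shows "\<exists>k. (1/2) ^ Suc k \<le> \<tau> \<and> \<tau> < (1/2::real) ^ k"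
proof -
  obtain n where n: "(1/2::real) ^ n < \<tau>" using real_arch_pow_inv[of \<tau> "1/2"] assms by auto
  have Pn: "(1/2::real) ^ Suc n \<le> \<tau>" using n assms by simp
  define i where "i = (LEAST j. (1/2::real) ^ Suc j \<le> \<tau>)"
  have Pi: "(1/2::real) ^ Suc i \<le> \<tau>" unfolding i_def by (rule LeastI[of "\<lambda>j. (1/2::real) ^ Suc j \<le> \<tau>", OF Pn])
  have "\<tau> < (1/2) ^ i"
  proof (cases i)
    case (Suc i')
    then have "\<not> (1/2::real) ^ Suc i' \<le> \<tau>" using Least_le[of "\<lambda>j. (1/2::real) ^ Suc j \<le> \<tau>" i']
      unfolding i_def[symmetric] by auto
    then show ?thesis using Suc by simp
  qed (use assms in simp)
  then show ?thesis using Pi by blast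
qed

lemma dyad_unique:
  assumes "(1/2) ^ Suc k \<le> \<tau>" "\<tau> < (1/2::real) ^ k" "(1/2) ^ Suc k' \<le> \<tau>" "\<tau> < (1/2::real) ^ k'"
  shows "k = k'"
proof (rule ccontr)
  assume "k \<noteq> k'"
  then consider "Suc k \<le> k'" | "Suc k' \<le> k" by linarith
  then show False
  proof cases
    case 1 then have "(1/2::real) ^ k' \<le> (1/2) ^ Suc k" by (intro power_decreasing) auto
    then show False using assms by linarith
  next
    case 2 then have "(1/2::real) ^ k \<le> (1/2) ^ Suc k'" by (intro power_decreasing) auto
    then show False using assms by linarith
  qed
qed

lemma nn_int_inv:
  assumes "0 < a" "a \<le> b"
  shows "(\<integral>\<^sup>+ \<tau>. ennreal (1 / \<tau>) * indicator {a..b} \<tau> \<partial>lborel) = ennreal (ln b - ln a)"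
proof (rule nn_integral_has_integral_lebesgue')
  show "\<And>x. x \<in> {a..b} \<Longrightarrow> 0 \<le> 1 / x" using assms by auto
  show "((\<lambda>x. 1 / x) has_integral ln b - ln a) {a..b}"
  proof (rule fundamental_theorem_of_calculus[OF assms(2)])
    fix x assume "x \<in> {a..b}"
    then have "x > 0" using assms by auto
    then have "(ln has_real_derivative (1 / x)) (at x within {a..b})"
      by (auto intro!: derivative_eq_intros)
    then show "(ln has_vector_derivative 1 / x) (at x within {a..b})"
      by (simp add: has_real_derivative_iff_has_vector_derivative)
  qed
qed

lemma nn_int_powr:
  assumes "0 \<le> c" "-1 < e" "0 \<le> l"
  shows "(\<integral>\<^sup>+ \<tau>. ennreal (l * \<tau> powr e) * indicator {0..c} \<tau> \<partial>lborel) = ennreal (l * (c powr (e+1) / (e+1)))"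
proof (rule nn_integral_has_integral_lebesgue')
  show "\<And>x. x \<in> {0..c} \<Longrightarrow> 0 \<le> l * x powr e" using assms by auto
  show "((\<lambda>x. l * x powr e) has_integral l * (c powr (e + 1) / (e + 1))) {0..c}"
    by (intro has_integral_mult_right has_integral_powr_from_0) (use assms in auto)
qed

lemma nn_int_const:
  assumes "a \<le> b"
  shows "(\<integral>\<^sup>+ \<tau>. ennreal v * indicator {a..b} \<tau> \<partial>lborel) = ennreal v * ennreal (b - a)"
  using assms by (simp add: nn_integral_cmult_indicator)

lemma nn_int_const_Ico:
  assumes "a \<le> b"
  shows "(\<integral>\<^sup>+ \<tau>. ennreal v * indicator {a..<b} \<tau> \<partial>lborel) = ennreal v * ennreal (b - a)"
  using assms by (simp add: nn_integral_cmult_indicator)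

lemma nn_int_const_Ioc:
  assumes "a \<le> b"
  shows "(\<integral>\<^sup>+ \<tau>. ennreal v * indicator {a<..b} \<tau> \<partial>lborel) = ennreal v * ennreal (b - a)"
  using assms by (simp add: nn_integral_cmult_indicator)

lemma meas_antimono_ind:
  fixes G :: "real \<Rightarrow> real"
  assumes anti: "\<And>s1 s2. 0 < s1 \<Longrightarrow> s1 \<le> s2 \<Longrightarrow> G s2 \<le> G s1" and a: "0 < a"
  shows "(\<lambda>s. ennreal (G s powr p) * indicator {a..b} s) \<in> borel_measurable borel"
proof -
  have m: "(\<lambda>s. - G (max a s)) \<in> borel_measurable borel"
  proof (rule borel_measurable_mono, rule monoI)
    fix x y :: real assume "x \<le> y"
    moreover have "0 < max a x" using a by (simp add: less_max_iff_disj)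
    ultimately show "- G (max a x) \<le> - G (max a y)" using anti[of "max a x" "max a y"] by simp
  qed
  then have m2: "(\<lambda>s. G (max a s)) \<in> borel_measurable borel"
    using borel_measurable_uminus[OF m] by simp
  have eq: "(\<lambda>s. ennreal (G s powr p) * indicator {a..b} s) =
        (\<lambda>s. ennreal (G (max a s) powr p) * indicator {a..b} s)"
    by (rule ext) (auto simp: indicator_def max_def)
  show ?thesis unfolding eq using m2 by measurable
qed

lemma ennreal_suminf_swap:
  fixes f :: "nat \<Rightarrow> nat \<Rightarrow> ennreal"
  shows "(\<Sum>k. \<Sum>i. f k i) = (\<Sum>i. \<Sum>k. f k i)"
proof -
  have "(\<Sum>k. \<Sum>i. f k i) = (\<Sum>k. \<integral>\<^sup>+ i. f k i \<partial>count_space UNIV)"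
    by (simp add: nn_integral_count_space_nat)
  also have "\<dots> = (\<integral>\<^sup>+ i. (\<Sum>k. f k i) \<partial>count_space UNIV)"
    by (rule nn_integral_suminf[symmetric]) simp
  also have "\<dots> = (\<Sum>i. \<Sum>k. f k i)" by (simp add: nn_integral_count_space_nat)
  finally show ?thesis .
qed

lemma ennreal_geom:
  assumes "0 \<le> c" "c < (1::real)"
  shows "(\<Sum>m. ennreal (c ^ m)) = ennreal (1 / (1 - c))"
proof -
  have "(\<Sum>m. ennreal (c ^ m)) = ennreal (\<Sum>m. c ^ m)"
    using assms by (intro suminf_ennreal2) (auto intro: summable_geometric)
  also have "(\<Sum>m. c ^ m) = 1 / (1 - c)" using assms by (simp add: suminf_geometric)
  finally show ?thesis .
qed

lemma ennreal_suminf_shift_le: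
  fixes f :: "nat \<Rightarrow> ennreal"
  shows "(\<Sum>k. f (k + m)) \<le> (\<Sum>k. f k)"
  using suminf_offset[of f m] by (simp add: add_increasing2)

lemma ennreal_suminf_shift_eq:
  fixes h :: "nat \<Rightarrow> ennreal"
  shows "(\<Sum>k. if m \<le> k then h (k - m) else 0) = (\<Sum>k. h k)"
  using suminf_offset[of "\<lambda>k. if m \<le> k then h (k - m) else 0" m] by simp

lemma enn_powr_le_root:
  assumes "0 < r" "enn_powr y r \<le> X"
  shows "y \<le> enn_powr X (1/r)"
proof -
  have "y = enn_powr (enn_powr y r) (1/r)" using enn_powr_powr[of r "1/r" y] assms by simp
  also have "\<dots> \<le> enn_powr X (1/r)" using assms by (intro enn_powr_mono) auto
  finally show ?thesis .
qed

lemma powr_power_comm: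
  fixes d r :: real
  assumes "0 \<le> d"
  shows "(d ^ m) powr r = (d powr r) ^ m"
proof (cases "d = 0")
  case True then show ?thesis by (cases m) auto
next
  case False
  then have dp: "0 < d" using assms by simp
  have "(d ^ m) powr r = (d powr real m) powr r" using dp by (simp add: powr_realpow)
  also have "\<dots> = d powr (r * real m)" by (simp add: powr_powr mult.commute)
  also have "\<dots> = (d powr r) powr real m" by (simp add: powr_powr)
  also have "\<dots> = (d powr r) ^ m" using dp by (simp add: powr_realpow)
  finally show ?thesis .
qed

lemma discrete_hardy:
  fixes Y :: "nat \<Rightarrow> nat \<Rightarrow> ennreal" and c r :: real
  assumes c: "0 \<le> c" "c < 1" and r: "1 \<le> r" and T: "\<And>m. (\<Sum>k. enn_powr (Y k m) r) \<le> T"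
  shows "(\<Sum>k. enn_powr (\<Sum>m. ennreal (c ^ m) * Y k m) r)
           \<le> ennreal ((1 / (1 - sqrt c)) powr r * (1 / (1 - sqrt c powr r))) * T"
proof -
  define d where "d = sqrt c"
  have d: "0 \<le> d" "d < 1" using c by (auto simp: d_def)
  define e where "e = d powr r"
  have e: "0 \<le> e" "e < 1"
  proof -
    show "0 \<le> e" by (simp add: e_def)
    show "e < 1"
    proof (cases "d = 0")
      case False
      then have "e \<le> d" unfolding e_def using d r by (intro powr_le_one_le) auto
      then show ?thesis using d by simp
    qed (simp add: e_def)
  qed
  have rp: "0 < r" using r by simp
  define A where "A = (1 / (1 - d)) powr r"
  define M where "M k = enn_powr (\<Sum>m. enn_powr (ennreal (d ^ m) * Y k m) r) (1/r)" for k
  have step: "enn_powr (\<Sum>m. ennreal (c ^ m) * Y k m) r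
      \<le> ennreal A * (\<Sum>m. ennreal (e ^ m) * enn_powr (Y k m) r)" for k
  proof -
    have le: "ennreal (d ^ m) * Y k m \<le> M k" for m
      unfolding M_def
    proof (rule enn_powr_le_root[OF rp])
      show "enn_powr (ennreal (d ^ m) * Y k m) r \<le> (\<Sum>m. enn_powr (ennreal (d ^ m) * Y k m) r)"
        using sum_le_suminf[of "\<lambda>m. enn_powr (ennreal (d ^ m) * Y k m) r" "{m}"] by simp
    qed
    have cm: "ennreal (c ^ m) * Y k m = ennreal (d ^ m) * (ennreal (d ^ m) * Y k m)" for m
    proof -
      have "c ^ m = d ^ m * d ^ m" using c by (simp add: d_def power_mult_distrib[symmetric])
      then show ?thesis using d by (simp add: ennreal_mult mult.assoc)
    qed
    have "(\<Sum>m. ennreal (c ^ m) * Y k m) = (\<Sum>m. ennreal (d ^ m) * (ennreal (d ^ m) * Y k m))"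
      by (simp add: cm)
    also have "\<dots> \<le> (\<Sum>m. ennreal (d ^ m) * M k)"
      by (intro suminf_le summableI mult_left_mono le) auto
    also have "\<dots> = ennreal (1 / (1 - d)) * M k" using ennreal_geom[OF d] by simp
    finally have "enn_powr (\<Sum>m. ennreal (c ^ m) * Y k m) r \<le> enn_powr (ennreal (1 / (1 - d)) * M k) r"
      using rp by (rule enn_powr_mono[rotated])
    also have "\<dots> = ennreal A * (\<Sum>m. enn_powr (ennreal (d ^ m) * Y k m) r)"
      using rp d by (simp add: enn_powr_mult enn_powr_ennreal A_def M_def enn_powr_inv)
    also have "(\<Sum>m. enn_powr (ennreal (d ^ m) * Y k m) r) = (\<Sum>m. ennreal (e ^ m) * enn_powr (Y k m) r)"
      using rp d by (simp add: enn_powr_mult enn_powr_ennreal e_def powr_power_comm)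
    finally show ?thesis .
  qed
  have "(\<Sum>k. enn_powr (\<Sum>m. ennreal (c ^ m) * Y k m) r)
      \<le> (\<Sum>k. ennreal A * (\<Sum>m. ennreal (e ^ m) * enn_powr (Y k m) r))"
    by (intro suminf_le summableI step)
  also have "\<dots> = ennreal A * (\<Sum>m. ennreal (e ^ m) * (\<Sum>k. enn_powr (Y k m) r))"
    by (simp add: ennreal_suminf_swap[of "\<lambda>k m. ennreal (e ^ m) * enn_powr (Y k m) r"])
  also have "\<dots> \<le> ennreal A * (\<Sum>m. ennreal (e ^ m) * T)"
    by (intro mult_left_mono suminf_le summableI T) auto
  also have "\<dots> = ennreal A * ennreal (1 / (1 - e)) * T" using ennreal_geom[OF e] by (simp add: mult.assoc)
  also have "\<dots> = ennreal ((1 / (1 - sqrt c)) powr r * (1 / (1 - sqrt c powr r))) * T"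
  proof -
    have "ennreal A * ennreal (1 / (1 - e)) = ennreal (A * (1 / (1 - e)))"
      using e by (intro ennreal_mult'[symmetric]) (auto simp: A_def)
    then show ?thesis by (simp add: A_def d_def e_def)
  qed
  finally show ?thesis .
qed


lemma ln2_bounds: "1/2 \<le> ln (2::real)" "ln (2::real) \<le> 1"
proof -
  have "ln (1/2::real) \<le> 1/2 - 1" by (rule ln_le_minus_one) simp
  then show "1/2 \<le> ln (2::real)" by (simp add: ln_div)
  show "ln (2::real) \<le> 1" using ln_2_less_1 by simp
qed

lemma inv_bound:
  assumes "0 < w" "0 < q" "0 \<le> G" "ennreal w * enn_powr X q \<le> ennreal G"
  shows "X \<le> ennreal ((G / w) powr (1/q))"
proof (cases X rule: enn_powr_cases)
  case top
  then show ?thesis using assms by (simp add: ennreal_mult_top top_unique)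
next
  case (fin x)
  then have "ennreal (w * x powr q) \<le> ennreal G" using assms
    by (simp add: enn_powr_ennreal ennreal_mult)
  then have "w * x powr q \<le> G" using assms by (simp add: ennreal_le_iff)
  then have "x powr q \<le> G / w" using assms by (simp add: field_simps)
  then have "(x powr q) powr (1/q) \<le> (G / w) powr (1/q)" using assms by (intro powr_mono2) auto
  then show ?thesis using fin assms by (simp add: powr_powr ennreal_leI)
qed

lemma LB_arith:
  fixes G M br p u :: real
  assumes G: "0 \<le> G" and M: "0 \<le> M" and br: "0 \<le> br" and p: "1 < p" and u: "1 \<le> u"
    and br_le: "br \<le> 2 powr p * (2 * ((G / ((1 + 2 * u * ln 2) powr (-1/p))) powr p)
          + 2 * ((M / ((1 + u * ln 2) powr (-1/p) * (u * ln 2 - ln (8/7)))) powr p))"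
  shows "u powr (-1/p) * br powr (1/p) \<le> 24 * (G + M / u)"
proof -
  have l2: "1/2 \<le> ln (2::real)" "ln (2::real) \<le> 1" by (rule ln2_bounds)+
  have l87: "ln (8/7::real) \<le> 1/7" using ln_le_minus_one[of "8/7::real"] by simp
  define L where "L = u * ln 2 - ln (8/7)"
  have "u * (1/2) \<le> u * ln 2" using mult_left_mono[OF l2(1), of u] u by simp
  then have L: "u / 3 \<le> L" unfolding L_def using l87 u by linarith
  have Lp: "0 < L" using L u by simp
  define A where "A = G / ((1 + 2 * u * ln 2) powr (-1/p))"
  define B where "B = M / ((1 + u * ln 2) powr (-1/p) * L)"
  have pos1: "0 < 1 + 2 * u * ln 2" "0 < 1 + u * ln 2" using u l2 by (auto intro: add_pos_nonneg)
  have A0: "0 \<le> A" using G by (simp add: A_def)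
  have B0: "0 \<le> B" using M Lp by (simp add: B_def)
  have pp: "0 < 1/p" "1/p \<le> 1" using p by auto
  have up: "0 < u powr (1/p)" using u by simp
  have A_eq: "A = G * (1 + 2 * u * ln 2) powr (1/p)"
    using pos1 by (simp add: A_def powr_minus divide_inverse)
  have u2: "u * ln 2 \<le> u" using mult_left_mono[OF l2(2), of u] u by simp
  have u3: "1 + 2 * u * ln 2 \<le> 3 * u" "1 + u * ln 2 \<le> 2 * u" using u2 u by linarith+
  have "(1 + 2 * u * ln 2) powr (1/p) \<le> (3 * u) powr (1/p)"
    using pos1 u3 pp by (intro powr_mono2) auto
  also have "\<dots> = 3 powr (1/p) * u powr (1/p)" using u by (simp add: powr_mult)
  also have "3 powr (1/p) \<le> (3::real)" using powr_mono[of "1/p" 1 3] pp by simp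
  then have "3 powr (1/p) * u powr (1/p) \<le> 3 * u powr (1/p)" using up by (intro mult_right_mono) auto
  finally have A_le: "A \<le> 3 * u powr (1/p) * G"
    using G A_eq by (simp add: mult_left_mono mult.commute mult.left_commute)
  have B_eq: "B = M * (1 + u * ln 2) powr (1/p) / L"
    using pos1 by (simp add: B_def powr_minus divide_inverse)
  have "(1 + u * ln 2) powr (1/p) \<le> (2 * u) powr (1/p)"
    using pos1 u3 pp by (intro powr_mono2) auto
  also have "\<dots> = 2 powr (1/p) * u powr (1/p)" using u by (simp add: powr_mult)
  also have "2 powr (1/p) \<le> (2::real)" using powr_mono[of "1/p" 1 2] pp by simp
  then have "2 powr (1/p) * u powr (1/p) \<le> 2 * u powr (1/p)" using up by (intro mult_right_mono) auto
  finally have c1: "(1 + u * ln 2) powr (1/p) \<le> 2 * u powr (1/p)" .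
  have "M * (1 + u * ln 2) powr (1/p) \<le> M * (2 * u powr (1/p))" by (rule mult_left_mono[OF c1 M])
  moreover have "0 \<le> M * (2 * u powr (1/p))" using M up by simp
  moreover have "0 < u / 3" using u by simp
  ultimately have "B \<le> M * (2 * u powr (1/p)) / (u / 3)"
    unfolding B_eq using frac_le[of "M * (2 * u powr (1/p))" "M * (1 + u * ln 2) powr (1/p)" "u/3" L] L
    by blast
  then have B_le: "B \<le> 6 * u powr (1/p) * M / u" by (simp add: field_simps)
  have brAB: "br \<le> 2 powr p * (2 * (A powr p + B powr p))"
    using br_le unfolding A_def B_def L_def by (simp add: distrib_left)
  have "br powr (1/p) \<le> (2 powr p * (2 * (A powr p + B powr p))) powr (1/p)"
    by (rule powr_mono2[OF _ br brAB]) (use pp in simp)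
  also have "\<dots> = (2 powr p) powr (1/p) * (2 powr (1/p) * (A powr p + B powr p) powr (1/p))"
    using powr_mult[of "2 powr p" "2 * (A powr p + B powr p)" "1/p"]
      powr_mult[of 2 "A powr p + B powr p" "1/p"] by simp
  also have "\<dots> = (2 powr p) powr (1/p) * 2 powr (1/p) * (A powr p + B powr p) powr (1/p)"
    by (simp add: mult.assoc)
  also have "(2 powr p) powr (1/p) = (2::real)" using p by (simp add: powr_powr)
  also have "(A powr p + B powr p) powr (1/p) \<le> (A powr p) powr (1/p) + (B powr p) powr (1/p)"
    using pp by (intro powr_add_subadd) auto
  also have "(A powr p) powr (1/p) = A" using A0 p by (simp add: powr_powr)
  also have "(B powr p) powr (1/p) = B" using B0 p by (simp add: powr_powr)
  finally have "br powr (1/p) \<le> 2 * 2 powr (1/p) * (A + B)"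
    using A0 B0 by (simp add: mult_left_mono)
  also have "\<dots> \<le> 4 * (A + B)"
    using \<open>2 powr (1/p) \<le> 2\<close> A0 B0 by (intro mult_right_mono) auto
  finally have "u powr (-1/p) * br powr (1/p) \<le> u powr (-1/p) * (4 * (A + B))"
    using u by (intro mult_left_mono) auto
  also have "\<dots> \<le> u powr (-1/p) * (4 * (3 * u powr (1/p) * G + 6 * u powr (1/p) * M / u))"
    using A_le B_le u by (intro mult_left_mono) auto
  also have "\<dots> = 12 * G + 24 * M / u"
  proof -
    have wv: "u powr (-1/p) * u powr (1/p) = 1" using u by (simp add: powr_add[symmetric])
    have "u powr (-1/p) * (4 * (3 * u powr (1/p) * G + 6 * u powr (1/p) * M / u))
        = 4 * (3 * (u powr (-1/p) * u powr (1/p)) * G + 6 * (u powr (-1/p) * u powr (1/p)) * M / u)"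
      by (simp add: algebra_simps)
    then show ?thesis unfolding wv by simp
  qed
  also have "\<dots> \<le> 24 * (G + M / u)" using G by simp
  finally show ?thesis .
qed

context
  fixes \<Omega> :: "'a::euclidean_space set" and p :: real
  assumes OmS: "\<Omega> \<in> sets lebesgue" and Om1: "emeasure lebesgue \<Omega> = 1" and p: "1 < p"
begin

lemmas dec_attain_D = dec_attain[OF OmS Om1]
lemmas dec_nonneg_D = dec_nonneg[OF OmS Om1]
lemmas dec_antimono_D = dec_antimono[OF OmS Om1]
lemmas dec_sum_D = dec_sum[OF OmS Om1]
lemmas dec_dom_D = dec_dom[OF OmS Om1]
lemmas dec_bound_D = dec_bound[OF OmS Om1]
lemmas dec_zero_D = dec_zero[OF OmS Om1]

definition bk :: "('a \<Rightarrow> real) \<Rightarrow> nat \<Rightarrow> ennreal" where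
  "bk f k = (\<integral>\<^sup>+ s\<in>{tt (Suc k)..tt k}. ennreal (dec_rearr \<Omega> f s powr p) \<partial>lborel)"

lemma meas_dec:
  assumes "g \<in> borel_measurable (lebesgue_on \<Omega>)" "0 < a"
  shows "(\<lambda>s. ennreal (dec_rearr \<Omega> g s powr p) * indicator {a..b} s) \<in> borel_measurable borel"
  by (rule meas_antimono_ind[OF _ assms(2)]) (rule dec_antimono_D[OF assms(1)])

lemma bk_fin:
  assumes fm: "f \<in> borel_measurable (lebesgue_on \<Omega>)"
  shows "bk f k < \<infinity>"
proof -
  define a where "a = tt (Suc k)"
  have a: "0 < a" "a \<le> tt k" using tt_pos tt_antimono[of k "Suc k"] by (auto simp: a_def)
  have "bk f k \<le> (\<integral>\<^sup>+ s. ennreal (dec_rearr \<Omega> f a powr p) * indicator {a..tt k} s \<partial>lborel)"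
    unfolding bk_def a_def[symmetric]
  proof (intro nn_integral_mono)
    fix s show "ennreal (dec_rearr \<Omega> f s powr p) * indicator {a..tt k} s
        \<le> ennreal (dec_rearr \<Omega> f a powr p) * indicator {a..tt k} s"
    proof (cases "s \<in> {a..tt k}")
      case True
      then have "dec_rearr \<Omega> f s \<le> dec_rearr \<Omega> f a" using dec_antimono_D[OF fm a(1)] by auto
      moreover have "0 \<le> dec_rearr \<Omega> f s" using True a dec_nonneg_D[OF fm, of s] by auto
      ultimately show ?thesis using True p by (auto intro!: ennreal_leI powr_mono2)
    qed simp
  qed
  also have "\<dots> = ennreal (dec_rearr \<Omega> f a powr p) * ennreal (tt k - a)"
    using a by (intro nn_int_const) auto
  also have "\<dots> < \<infinity>" by (simp add: ennreal_mult_less_top)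
  finally show ?thesis .
qed

lemma grand_le:
  assumes "0 < \<tau>" "\<tau> < 1"
  shows "ennreal ((1 - ln \<tau>) powr (-1/p)) *
      enn_powr (\<integral>\<^sup>+ s\<in>{\<tau>..1}. ennreal (dec_rearr \<Omega> g s powr p) \<partial>lborel) (1/p) \<le> grand_norm \<Omega> p g"
  unfolding grand_norm_def by (rule SUP_upper[where f="\<lambda>t. ennreal ((1 - ln t) powr (-1/p)) *
      enn_powr (\<integral>\<^sup>+ s\<in>{t..1}. ennreal (dec_rearr \<Omega> g s powr p) \<partial>lborel) (1/p)"]) (use assms in auto)

lemma LB:
  fixes f g0 g1 :: "'a \<Rightarrow> real"
  assumes fm: "f \<in> borel_measurable (lebesgue_on \<Omega>)"
    and g0: "g0 \<in> grand_space \<Omega> p" and g1: "g1 \<in> small_space \<Omega> p"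
    and eq: "\<And>x. x \<in> \<Omega> \<Longrightarrow> f x = g0 x + g1 x"
  shows "ennreal ((2 ^ k) powr (-1/p) * enn2real (bk f k) powr (1/p))
     \<le> ennreal 24 * (grand_norm \<Omega> p g0 + ennreal (1 / 2 ^ k) * small_norm \<Omega> p g1)"
proof -
  have g0m: "g0 \<in> borel_measurable (lebesgue_on \<Omega>)" and g1m: "g1 \<in> borel_measurable (lebesgue_on \<Omega>)"
    using g0 g1 by (auto simp: grand_space_def small_space_def)
  define G where "G = enn2real (grand_norm \<Omega> p g0)"
  define M where "M = enn2real (small_norm \<Omega> p g1)"
  have GG: "grand_norm \<Omega> p g0 = ennreal G" using g0 by (auto simp: G_def grand_space_def less_top)
  have MM: "small_norm \<Omega> p g1 = ennreal M" using g1 by (auto simp: M_def small_space_def less_top)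
  have G0: "0 \<le> G" "0 \<le> M" by (auto simp: G_def M_def)
  define a where "a = tt (Suc k)"
  define b where "b = tt k"
  have ab: "0 < a" "a \<le> b / 2" "b \<le> 1" "0 < b"
    using tt_pos tt_half[of k] tt_le1[of k] by (auto simp: a_def b_def)
  define u :: real where "u = 2 ^ k"
  have u1: "1 \<le> u" by (simp add: u_def)
  have p0: "0 < p" using p by simp
  define h0 where "h0 s = ennreal (dec_rearr \<Omega> g0 s powr p) * indicator {a/2..b/2} s" for s
  define h1 where "h1 s = ennreal (dec_rearr \<Omega> g1 s powr p) * indicator {a/2..b/2} s" for s
  have h0m: "h0 \<in> borel_measurable borel" unfolding h0_def by (rule meas_dec[OF g0m]) (use ab in simp)
  have h1m: "h1 \<in> borel_measurable borel" unfolding h1_def by (rule meas_dec[OF g1m]) (use ab in simp)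
  have hm2: "(\<lambda>s. h (s / 2)) \<in> borel_measurable borel" if "h \<in> borel_measurable borel" for h :: "real \<Rightarrow> ennreal"
    using that by measurable
  have aff: "(\<integral>\<^sup>+ s. h (s/2) \<partial>lborel) = 2 * (\<integral>\<^sup>+ s. h s \<partial>lborel)"
    if "h \<in> borel_measurable borel" for h :: "real \<Rightarrow> ennreal"
    using nn_integral_real_affine[OF hm2[OF that], of 2 0] by simp
  have "bk f k \<le> (\<integral>\<^sup>+ s. ennreal (2 powr p) * (h0 (s/2) + h1 (s/2)) \<partial>lborel)"
    unfolding bk_def a_def[symmetric] b_def[symmetric]
  proof (rule nn_integral_mono)
    fix s
    show "ennreal (dec_rearr \<Omega> f s powr p) * indicator {a..b} s \<le> ennreal (2 powr p) * (h0 (s/2) + h1 (s/2))"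
    proof (cases "s \<in> {a..b}")
      case True
      then have s: "0 < s" "0 < s/2" using ab by auto
      have ind: "indicator {a/2..b/2} (s/2) = (1::ennreal)" using True by (auto simp: indicator_def)
      define x0 where "x0 = dec_rearr \<Omega> g0 (s/2)"
      define x1 where "x1 = dec_rearr \<Omega> g1 (s/2)"
      have x0: "0 \<le> x0" "0 \<le> x1" using dec_nonneg_D[OF g0m s(2)] dec_nonneg_D[OF g1m s(2)]
        by (auto simp: x0_def x1_def)
      have "dec_rearr \<Omega> f s \<le> x0 + x1" unfolding x0_def x1_def
        by (rule dec_sum_D[OF fm g0m g1m eq s(1)])
      then have "dec_rearr \<Omega> f s powr p \<le> (x0 + x1) powr p"
        using dec_nonneg_D[OF fm s(1)] p0 by (intro powr_mono2) auto
      also have "\<dots> \<le> 2 powr p * (x0 powr p + x1 powr p)" using x0 p0 by (rule powr_add_le2)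
      finally have "ennreal (dec_rearr \<Omega> f s powr p) \<le> ennreal (2 powr p) * (ennreal (x0 powr p) + ennreal (x1 powr p))"
        by (simp add: ennreal_mult[symmetric] ennreal_plus[symmetric] ennreal_leI del: ennreal_plus)
      then show ?thesis using True ind by (simp add: h0_def h1_def x0_def x1_def)
    qed simp
  qed
  also have "\<dots> = ennreal (2 powr p) * ((\<integral>\<^sup>+ s. h0 (s/2) \<partial>lborel) + (\<integral>\<^sup>+ s. h1 (s/2) \<partial>lborel))"
    using hm2[OF h0m] hm2[OF h1m] by (simp add: nn_integral_cmult nn_integral_add)
  also have "\<dots> = ennreal (2 powr p) * (2 * (\<integral>\<^sup>+ s. h0 s \<partial>lborel) + 2 * (\<integral>\<^sup>+ s. h1 s \<partial>lborel))"
    using aff[OF h0m] aff[OF h1m] by simp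
  finally have bk1: "bk f k \<le> ennreal (2 powr p) * (2 * (\<integral>\<^sup>+ s. h0 s \<partial>lborel) + 2 * (\<integral>\<^sup>+ s. h1 s \<partial>lborel))" .
  define \<tau> where "\<tau> = a / 2"
  have tau: "0 < \<tau>" "\<tau> < 1" using ab by (auto simp: \<tau>_def)
  define w0 where "w0 = (1 - ln \<tau>) powr (-1/p)"
  have "ln \<tau> < 0" by (rule ln_less_zero[OF tau(1) tau(2)])
  then have "0 < 1 - ln \<tau>" by linarith
  then have w0: "0 < w0" by (simp add: w0_def)
  have "(\<integral>\<^sup>+ s. h0 s \<partial>lborel) \<le> (\<integral>\<^sup>+ s\<in>{\<tau>..1}. ennreal (dec_rearr \<Omega> g0 s powr p) \<partial>lborel)"
    unfolding h0_def \<tau>_def using ab by (intro nn_integral_mono) (auto simp: indicator_def)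
  also have "\<dots> \<le> ennreal ((G / w0) powr (1 / (1/p)))"
    by (rule inv_bound[OF w0 _ G0(1)]) (use grand_le[OF tau, of g0] p0 in \<open>simp_all add: GG w0_def\<close>)
  finally have I0: "(\<integral>\<^sup>+ s. h0 s \<partial>lborel) \<le> ennreal ((G / w0) powr p)" by simp
  define \<sigma> where "\<sigma> = b / 2"
  have sig: "0 < \<sigma>" "\<sigma> \<le> 1/2" "a/2 \<le> \<sigma>" using ab by (auto simp: \<sigma>_def)
  define ws where "ws = (1 - ln \<sigma>) powr (-1/p)"
  have "ln \<sigma> < 0" using sig by (intro ln_less_zero) auto
  then have "0 < 1 - ln \<sigma>" by linarith
  then have ws: "0 < ws" by (simp add: ws_def)
  define L where "L = ln (7/8) - ln \<sigma>"
  have L: "0 < L" using sig unfolding L_def by (simp add: ln_less_cancel_iff)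
  define H where "H t = (\<integral>\<^sup>+ s\<in>{0<..t}. ennreal (dec_rearr \<Omega> g1 s powr p) \<partial>lborel)" for t
  have "(\<integral>\<^sup>+ s. h1 s \<partial>lborel) \<le> H \<sigma>"
    unfolding h1_def H_def \<sigma>_def using ab by (intro nn_integral_mono) (auto simp: indicator_def)
  moreover have "H \<sigma> \<le> ennreal ((M / (ws * L)) powr (1 / (1/p)))"
  proof (rule inv_bound)
    show "0 < ws * L" using ws L by simp
    show "0 < 1/p" "0 \<le> M" using p0 G0 by auto
    have "ennreal (ws * L) * enn_powr (H \<sigma>) (1/p)
        = (\<integral>\<^sup>+ t. ennreal ws * enn_powr (H \<sigma>) (1/p) * (ennreal (1/t) * indicator {\<sigma>..7/8} t) \<partial>lborel)"
      using sig ws L by (subst nn_integral_cmult) (auto simp: nn_int_inv L_def ennreal_mult mult_ac)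
    also have "\<dots> \<le> small_norm \<Omega> p g1"
      unfolding small_norm_def H_def[symmetric]
    proof (rule nn_integral_mono)
      fix t
      show "ennreal ws * enn_powr (H \<sigma>) (1/p) * (ennreal (1/t) * indicator {\<sigma>..7/8} t)
        \<le> ennreal ((1 - ln t) powr (-1/p)) * enn_powr (H t) (1/p) * ennreal (1/t) * indicator {0<..<1} t"
      proof (cases "t \<in> {\<sigma>..7/8}")
        case True
        then have t: "0 < t" "t < 1" "\<sigma> \<le> t" using sig by auto
        have lt0: "ln t < 0" using t by (intro ln_less_zero) auto
        have "ln \<sigma> \<le> ln t" using t sig by simp
        then have "ws \<le> (1 - ln t) powr (-1/p)" unfolding ws_def
          using lt0 p0 by (intro powr_mono2') auto
        moreover have "H \<sigma> \<le> H t" unfolding H_def using t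
          by (intro nn_integral_mono) (auto simp: indicator_def)
        then have "enn_powr (H \<sigma>) (1/p) \<le> enn_powr (H t) (1/p)" using p0 by (intro enn_powr_mono) auto
        ultimately show ?thesis using True t by (auto intro!: mult_mono ennreal_leI)
      qed simp
    qed
    finally show "ennreal (ws * L) * enn_powr (H \<sigma>) (1/p) \<le> ennreal M" by (simp add: MM)
  qed
  ultimately have I1: "(\<integral>\<^sup>+ s. h1 s \<partial>lborel) \<le> ennreal ((M / (ws * L)) powr p)" by simp
  have bkfin: "bk f k = ennreal (enn2real (bk f k))" using bk_fin[OF fm, of k] by (simp add: less_top)
  have "bk f k \<le> ennreal (2 powr p) * (2 * ennreal ((G / w0) powr p) + 2 * ennreal ((M / (ws * L)) powr p))"
    using bk1 I0 I1 by (meson add_mono order.trans mult_left_mono zero_le)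
  also have "\<dots> = ennreal (2 powr p * (2 * ((G / w0) powr p) + 2 * ((M / (ws * L)) powr p)))"
  proof -
    have e2: "ennreal (2 * x) = 2 * ennreal x" if "0 \<le> x" for x :: real
      using that ennreal_mult[of 2 x] by simp
    have "ennreal (2 * ((G / w0) powr p) + 2 * ((M / (ws * L)) powr p))
        = 2 * ennreal ((G / w0) powr p) + 2 * ennreal ((M / (ws * L)) powr p)"
      by (subst ennreal_plus) (simp_all add: e2)
    then show ?thesis by (subst ennreal_mult) auto
  qed
  finally have le_bk: "bk f k \<le> ennreal (2 powr p * (2 * ((G / w0) powr p) + 2 * ((M / (ws * L)) powr p)))" .
  have br: "enn2real (bk f k) \<le> 2 powr p * (2 * ((G / w0) powr p) + 2 * ((M / (ws * L)) powr p))"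
    using enn2real_mono[OF le_bk] by simp
  have lt: "ln \<tau> = - (2 * u) * ln 2" "ln \<sigma> = - u * ln 2"
    using tt_pos[of k] tt_pos[of "Suc k"]
    by (simp_all add: \<tau>_def \<sigma>_def a_def b_def ln_div ln_tt u_def algebra_simps)
  have main: "u powr (-1/p) * enn2real (bk f k) powr (1/p) \<le> 24 * (G + M / u)"
    by (rule LB_arith[OF G0 enn2real_nonneg p u1])
       (use br in \<open>simp add: w0_def ws_def L_def lt ln_div algebra_simps\<close>)
  then have "ennreal (u powr (-1/p) * enn2real (bk f k) powr (1/p)) \<le> ennreal (24 * (G + M / u))"
    by (rule ennreal_leI)
  also have "\<dots> = ennreal 24 * (ennreal G + ennreal (1 / u) * ennreal M)"
  proof -
    have "ennreal (M / u) = ennreal (1 / u) * ennreal M"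
      using ennreal_mult[of "1/u" M] G0 u1 by simp
    moreover have "ennreal (G + M / u) = ennreal G + ennreal (M / u)"
      using G0 u1 by (intro ennreal_plus) auto
    moreover have "ennreal (24 * (G + M / u)) = ennreal 24 * ennreal (G + M / u)"
      using G0 u1 by (intro ennreal_mult) auto
    ultimately show ?thesis by simp
  qed
  finally show ?thesis by (simp add: GG MM u_def)
qed

end

definition JJ :: "nat \<Rightarrow> real set" where "JJ k = {(1/2) ^ Suc k ..< (1/2) ^ k}"
definition JC :: "nat \<Rightarrow> real set" where "JC k = {(1/2) ^ Suc k .. (1/2) ^ k}"

lemma JJ_sub: "t \<in> JJ k \<Longrightarrow> 0 < t \<and> t < 1"
proof -
  assume t: "t \<in> JJ k"
  have "(0::real) < (1/2) ^ Suc k" by simp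
  moreover have "(1/2::real) ^ k \<le> 1" by (simp add: power_le_one)
  ultimately show ?thesis using t by (auto simp: JJ_def)
qed

lemma enn_term_le_suminf: "f n \<le> (\<Sum>k. (f k :: ennreal))"
  using sum_le_suminf[of f "{n}"] by simp

lemma interval_minorant:
  fixes \<phi> :: "real \<Rightarrow> ennreal" and c :: "nat \<Rightarrow> ennreal"
  assumes le: "\<And>k t. t \<in> JJ k \<Longrightarrow> c k \<le> \<phi> t"
  shows "(\<Sum>k. c k * ennreal ((1/2) ^ Suc k)) \<le> (\<integral>\<^sup>+ t. \<phi> t * indicator {0<..<1} t \<partial>lborel)"
proof -
  have meas: "JJ k \<in> sets lborel" for k by (simp add: JJ_def)
  have "(\<Sum>k. c k * ennreal ((1/2) ^ Suc k)) = (\<Sum>k. \<integral>\<^sup>+ t. c k * indicator (JJ k) t \<partial>lborel)"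
  proof (intro suminf_cong)
    fix k
    have "((1/2::real) ^ Suc k) \<le> (1/2) ^ k" by (intro power_decreasing) auto
    then have "emeasure lborel (JJ k) = ennreal ((1/2) ^ Suc k)" by (simp add: JJ_def)
    then show "c k * ennreal ((1/2) ^ Suc k) = (\<integral>\<^sup>+ t. c k * indicator (JJ k) t \<partial>lborel)"
      using meas by (simp add: nn_integral_cmult_indicator)
  qed
  also have "\<dots> = (\<integral>\<^sup>+ t. (\<Sum>k. c k * indicator (JJ k) t) \<partial>lborel)"
    using meas by (intro nn_integral_suminf[symmetric]) auto
  also have "\<dots> \<le> (\<integral>\<^sup>+ t. \<phi> t * indicator {0<..<1} t \<partial>lborel)"
  proof (rule nn_integral_mono)
    fix t
    show "(\<Sum>k. c k * indicator (JJ k) t) \<le> \<phi> t * indicator {0<..<1} t"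
    proof (cases "\<exists>k. t \<in> JJ k")
      case True
      then obtain k0 where k0: "t \<in> JJ k0" by blast
      have z: "c n * indicator (JJ n) t = 0" if "n \<notin> {k0}" for n
        using that k0 dyad_unique[of k0 t n] by (auto simp: JJ_def indicator_def)
      have "(\<Sum>k. c k * indicator (JJ k) t) = c k0"
        using suminf_finite[of "{k0}" "\<lambda>k. c k * indicator (JJ k) t", OF _ z] k0 by simp
      then show ?thesis using le[OF k0] JJ_sub[OF k0] by simp
    next
      case False
      then show ?thesis by (simp add: indicator_def)
    qed
  qed
  finally show ?thesis .
qed

lemma interval_majorant:
  fixes \<phi> :: "real \<Rightarrow> ennreal" and C :: "nat \<Rightarrow> ennreal"
  assumes le: "\<And>k t. t \<in> JC k \<Longrightarrow> 0 < t \<Longrightarrow> t < 1 \<Longrightarrow> \<phi> t \<le> C k"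
  shows "(\<integral>\<^sup>+ t. \<phi> t * indicator {0<..<1} t \<partial>lborel) \<le> (\<Sum>k. C k * ennreal ((1/2) ^ Suc k))"
proof -
  have meas: "JC k \<in> sets lborel" for k by (simp add: JC_def)
  have "(\<integral>\<^sup>+ t. \<phi> t * indicator {0<..<1} t \<partial>lborel) \<le> (\<integral>\<^sup>+ t. (\<Sum>k. C k * indicator (JC k) t) \<partial>lborel)"
  proof (rule nn_integral_mono)
    fix t
    show "\<phi> t * indicator {0<..<1} t \<le> (\<Sum>k. C k * indicator (JC k) t)"
    proof (cases "t \<in> {0<..<1}")
      case True
      then obtain k0 where k0: "(1/2) ^ Suc k0 \<le> t" "t < (1/2::real) ^ k0" using dyad_cover by auto
      then have tk: "t \<in> JC k0" by (simp add: JC_def)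
      have "\<phi> t * indicator {0<..<1} t \<le> C k0 * indicator (JC k0) t" using le[OF tk] True tk by simp
      also have "\<dots> \<le> (\<Sum>k. C k * indicator (JC k) t)"
        by (rule enn_term_le_suminf[of "\<lambda>k. C k * indicator (JC k) t" k0])
      finally show ?thesis .
    qed simp
  qed
  also have "\<dots> = (\<Sum>k. \<integral>\<^sup>+ t. C k * indicator (JC k) t \<partial>lborel)"
    using meas by (intro nn_integral_suminf) auto
  also have "\<dots> = (\<Sum>k. C k * ennreal ((1/2) ^ Suc k))"
  proof (intro suminf_cong)
    fix k
    have "((1/2::real) ^ Suc k) \<le> (1/2) ^ k" by (intro power_decreasing) auto
    then have "emeasure lborel (JC k) = ennreal ((1/2) ^ Suc k)" by (simp add: JC_def)
    then show "(\<integral>\<^sup>+ t. C k * indicator (JC k) t \<partial>lborel) = C k * ennreal ((1/2) ^ Suc k)"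
      using meas by (simp add: nn_integral_cmult_indicator)
  qed
  finally show ?thesis .
qed

lemma sum_meas:
  fixes f :: "'a::euclidean_space \<Rightarrow> real"
  assumes "f \<in> sum_space \<Omega> p"
  shows "f \<in> borel_measurable (lebesgue_on \<Omega>)"
proof -
  obtain g0 g1 where g: "g0 \<in> grand_space \<Omega> p" "g1 \<in> small_space \<Omega> p" "\<forall>x\<in>\<Omega>. f x = g0 x + g1 x"
    using assms by (auto simp: sum_space_def)
  have [measurable]: "g0 \<in> borel_measurable (lebesgue_on \<Omega>)" "g1 \<in> borel_measurable (lebesgue_on \<Omega>)"
    using g by (auto simp: grand_space_def small_space_def)
  have "(\<lambda>x. g0 x + g1 x) \<in> borel_measurable (lebesgue_on \<Omega>)" by measurable
  then show ?thesis using g(3) by (subst measurable_cong[where g="\<lambda>x. g0 x + g1 x"]) auto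
qed

lemma half_pow_powr: "((1/2::real) ^ k) powr (- \<theta>) = (2 ^ k) powr \<theta>"
proof -
  have "((1/2::real) ^ k) = 1 / 2 ^ k" by (simp add: power_divide)
  then show ?thesis by (simp add: powr_minus_divide powr_divide)
qed

context
  fixes \<Omega> :: "'a::euclidean_space set" and p \<theta> r :: real
  assumes OmS: "\<Omega> \<in> sets lebesgue" and Om1: "emeasure lebesgue \<Omega> = 1" and p: "1 < p"
    and th: "0 < \<theta>" "\<theta> < 1" and r: "1 \<le> r"
begin

definition zz :: "('a \<Rightarrow> real) \<Rightarrow> nat \<Rightarrow> real" where
  "zz f k = (2 ^ k) powr (\<theta> - 1/p) * enn2real (bk \<Omega> p f k) powr (1/p)"

lemma zz_nonneg: "0 \<le> zz f k" by (simp add: zz_def)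

lemma S_term:
  assumes fm: "f \<in> borel_measurable (lebesgue_on \<Omega>)"
  shows "ennreal (2 powr (real k * r * (\<theta> - 1/p))) * enn_powr (bk \<Omega> p f k) (r/p) = ennreal (zz f k powr r)"
proof -
  define b where "b = enn2real (bk \<Omega> p f k)"
  have bb: "bk \<Omega> p f k = ennreal b" "0 \<le> b"
    using bk_fin[OF OmS Om1 p fm, of k] by (auto simp: b_def less_top)
  have "zz f k powr r = ((2 ^ k) powr (\<theta> - 1/p)) powr r * (b powr (1/p)) powr r"
    by (simp add: zz_def b_def powr_mult)
  also have "((2::real) ^ k) powr (\<theta> - 1/p) = 2 powr (real k * (\<theta> - 1/p))"
    by (simp add: powr_realpow[symmetric] powr_powr)
  also have "(2 powr (real k * (\<theta> - 1/p))) powr r = 2 powr (real k * r * (\<theta> - 1/p))"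
    by (simp add: powr_powr mult_ac)
  also have "(b powr (1/p)) powr r = b powr (r/p)" by (simp add: powr_powr)
  finally show ?thesis using bb by (simp add: enn_powr_ennreal ennreal_mult)
qed

lemma K_lower:
  assumes f: "f \<in> sum_space \<Omega> p" and t: "t \<in> JJ k"
  shows "ennreal ((2 ^ k) powr (-1/p) * enn2real (bk \<Omega> p f k) powr (1/p) / 48) \<le> K_fun \<Omega> p f t"
  unfolding K_fun_def
proof (rule INF_greatest, clarify)
  fix g0 g1 assume g0: "g0 \<in> grand_space \<Omega> p" and g1: "g1 \<in> small_space \<Omega> p"
    and eq: "\<forall>x\<in>\<Omega>. f x = g0 x + g1 x"
  define v where "v = (2 ^ k) powr (-1/p) * enn2real (bk \<Omega> p f k) powr (1/p)"
  have v0: "0 \<le> v" by (simp add: v_def)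
  have tt: "0 < t" "(1/2::real) ^ Suc k \<le> t" using t JJ_sub[OF t] by (auto simp: JJ_def)
  have "1 / 2 ^ k = 2 * (1/2::real) ^ Suc k" by (simp add: power_divide)
  also have "\<dots> \<le> 2 * t" using tt by simp
  finally have "ennreal (1 / 2 ^ k) \<le> 2 * ennreal t" using tt ennreal_leI[of "1 / 2 ^ k" "2 * t"]
    by (simp add: ennreal_mult)
  have "ennreal v \<le> ennreal 24 * (grand_norm \<Omega> p g0 + ennreal (1 / 2 ^ k) * small_norm \<Omega> p g1)"
    unfolding v_def by (rule LB[OF OmS Om1 p sum_meas[OF f] g0 g1]) (use eq in auto)
  also have "\<dots> \<le> ennreal 24 * (grand_norm \<Omega> p g0 + (2 * ennreal t) * small_norm \<Omega> p g1)"
    using \<open>ennreal (1 / 2 ^ k) \<le> 2 * ennreal t\<close> by (intro mult_left_mono add_left_mono mult_right_mono) auto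
  also have "\<dots> \<le> ennreal 48 * (grand_norm \<Omega> p g0 + ennreal t * small_norm \<Omega> p g1)"
  proof -
    have "ennreal 24 * (grand_norm \<Omega> p g0 + (2 * ennreal t) * small_norm \<Omega> p g1)
        \<le> ennreal 24 * (2 * grand_norm \<Omega> p g0 + (2 * ennreal t) * small_norm \<Omega> p g1)"
      by (intro mult_left_mono add_right_mono) (auto intro: order.trans[OF _ mult_right_mono[of 1 2]])
    also have "\<dots> = ennreal 48 * (grand_norm \<Omega> p g0 + ennreal t * small_norm \<Omega> p g1)"
      by (simp add: distrib_left mult_ac ennreal_numeral[symmetric] ennreal_mult'[symmetric] del: ennreal_numeral)
    finally show ?thesis .
  qed
  moreover have "ennreal 48 * ennreal (v / 48) = ennreal v" using ennreal_mult[of 48 "v/48"] v0 by simp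
  ultimately have le: "ennreal 48 * ennreal (v / 48) \<le> ennreal 48 * (grand_norm \<Omega> p g0 + ennreal t * small_norm \<Omega> p g1)"
    by simp
  show "ennreal (v / 48) \<le> grand_norm \<Omega> p (fst (g0, g1)) + ennreal t * small_norm \<Omega> p (snd (g0, g1))"
    using le by (subst (asm) ennreal_mult_le_mult_iff) auto
qed

lemma interp_pow: "enn_powr (interp_norm \<Omega> p \<theta> r f) r =
   (\<integral>\<^sup>+ t. enn_powr (ennreal (t powr (-\<theta>)) * K_fun \<Omega> p f t) r * ennreal (1 / t) * indicator {0<..<1} t \<partial>lborel)"
  unfolding interp_norm_def using r by (simp add: enn_powr_inv)

lemma lower_main:
  assumes f: "f \<in> interp_space \<Omega> p \<theta> r"
  shows "ennreal (48 powr (-r) / 2) * (\<Sum>k. ennreal (zz f k powr r)) \<le> enn_powr (interp_norm \<Omega> p \<theta> r f) r"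
proof -
  have fs: "f \<in> sum_space \<Omega> p" using f by (simp add: interp_space_def)
  have r0: "0 < r" using r by simp
  define c where "c k = ennreal ((zz f k / 48) powr r * 2 ^ k)" for k
  have "(\<Sum>k. c k * ennreal ((1/2) ^ Suc k)) \<le>
     (\<integral>\<^sup>+ t. enn_powr (ennreal (t powr (-\<theta>)) * K_fun \<Omega> p f t) r * ennreal (1 / t) * indicator {0<..<1} t \<partial>lborel)"
  proof (rule interval_minorant)
    fix k t assume t: "t \<in> JJ k"
    have t01: "0 < t" "t < 1" using JJ_sub[OF t] by auto
    have tk: "t < (1/2) ^ k" "(1/2) ^ Suc k \<le> t" using t by (auto simp: JJ_def)
    define v where "v = (2 ^ k) powr (-1/p) * enn2real (bk \<Omega> p f k) powr (1/p)"
    have v0: "0 \<le> v" by (simp add: v_def)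
    have e: "\<theta> + (-1/p) = \<theta> - 1/p" by simp
    have "((2::real) ^ k) powr \<theta> * (2 ^ k) powr (-1/p) = (2 ^ k) powr (\<theta> + (-1/p))"
      by (simp only: powr_add)
    then have e2: "((2::real) ^ k) powr \<theta> * (2 ^ k) powr (-1/p) = (2 ^ k) powr (\<theta> - 1/p)"
      unfolding e .
    have zv: "(2 ^ k) powr \<theta> * v = zz f k"
      unfolding v_def zz_def mult.assoc[symmetric] e2 ..
    have "((1/2) ^ k) powr (- \<theta>) \<le> t powr (- \<theta>)"
      using powr_mono2'[of "-\<theta>" t "(1/2)^k"] t01 tk th by simp
    then have "(2 ^ k) powr \<theta> \<le> t powr (- \<theta>)" unfolding half_pow_powr .
    moreover have "ennreal (v / 48) \<le> K_fun \<Omega> p f t" unfolding v_def by (rule K_lower[OF fs t])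
    ultimately have "ennreal ((2 ^ k) powr \<theta>) * ennreal (v / 48) \<le> ennreal (t powr (-\<theta>)) * K_fun \<Omega> p f t"
      by (intro mult_mono ennreal_leI) auto
    moreover have "ennreal ((2 ^ k) powr \<theta> * (v / 48)) = ennreal ((2 ^ k) powr \<theta>) * ennreal (v / 48)"
      using v0 by (intro ennreal_mult) auto
    ultimately have "ennreal ((2 ^ k) powr \<theta> * (v / 48)) \<le> ennreal (t powr (-\<theta>)) * K_fun \<Omega> p f t"
      by simp
    then have "ennreal (((2 ^ k) powr \<theta> * (v / 48)) powr r) \<le> enn_powr (ennreal (t powr (-\<theta>)) * K_fun \<Omega> p f t) r"
    proof -
      have "ennreal (((2 ^ k) powr \<theta> * (v / 48)) powr r) = enn_powr (ennreal ((2 ^ k) powr \<theta> * (v / 48))) r"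
        using v0 by (simp add: enn_powr_ennreal)
      then show ?thesis using enn_powr_mono[OF r0 \<open>ennreal ((2 ^ k) powr \<theta> * (v / 48)) \<le> _\<close>] by simp
    qed
    moreover have "ennreal (2 ^ k) \<le> ennreal (1 / t)"
    proof -
      have "2 ^ k * t \<le> 2 ^ k * (1/2) ^ k" using tk by (intro mult_left_mono) auto
      also have "(2::real) ^ k * (1/2) ^ k = 1" by (simp add: power_mult_distrib[symmetric])
      finally have "2 ^ k * t \<le> 1" .
      then show ?thesis using t01 by (intro ennreal_leI) (simp add: field_simps)
    qed
    ultimately have "ennreal (((2 ^ k) powr \<theta> * (v / 48)) powr r) * ennreal (2 ^ k)
        \<le> enn_powr (ennreal (t powr (-\<theta>)) * K_fun \<Omega> p f t) r * ennreal (1 / t)"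
      by (rule mult_mono) auto
    moreover have "((2 ^ k) powr \<theta> * (v / 48)) = zz f k / 48" using zv by simp
    ultimately show "c k \<le> enn_powr (ennreal (t powr (-\<theta>)) * K_fun \<Omega> p f t) r * ennreal (1 / t)"
      unfolding c_def by (simp add: ennreal_mult)
  qed
  also have "\<dots> = enn_powr (interp_norm \<Omega> p \<theta> r f) r" by (simp add: interp_pow)
  also have "(\<Sum>k. c k * ennreal ((1/2) ^ Suc k)) = (\<Sum>k. ennreal (48 powr (-r) / 2) * ennreal (zz f k powr r))"
  proof (intro suminf_cong)
    fix k
    have "(zz f k / 48) powr r * 2 ^ k * (1/2) ^ Suc k = 48 powr (-r) / 2 * zz f k powr r"
      by (simp add: powr_divide powr_minus_divide power_divide field_simps)
    then show "c k * ennreal ((1/2) ^ Suc k) = ennreal (48 powr (-r) / 2) * ennreal (zz f k powr r)"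
      unfolding c_def by (simp add: ennreal_mult[symmetric])
  qed
  finally show ?thesis by simp
qed

end


lemma w_bound:
  fixes p :: real
  assumes p: "1 < p" and t: "0 < \<tau>" "\<tau> \<le> tt j"
  shows "(1 - ln \<tau>) powr (-1/p) \<le> 2 * (2 ^ j) powr (-1/p)"
proof -
  have l2: "1/2 \<le> ln (2::real)" "ln (2::real) \<le> 1" by (rule ln2_bounds)+
  have "ln \<tau> \<le> ln (tt j)" using t tt_pos[of j] by simp
  then have "1 - ln \<tau> \<ge> 1 - (1 - 2 ^ j) * ln 2" by (simp add: ln_tt)
  moreover have "1 - (1 - 2 ^ j) * ln 2 \<ge> (2 ^ j) * (1/2::real)"
  proof -
    have "1 - (1 - 2 ^ j) * ln 2 = (1 - ln 2) + 2 ^ j * ln (2::real)" by (simp add: algebra_simps)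
    moreover have "2 ^ j * (1/2) \<le> 2 ^ j * ln (2::real)" using l2 by (intro mult_left_mono) auto
    ultimately show ?thesis using l2 by linarith
  qed
  ultimately have le: "(2 ^ j) * (1/2::real) \<le> 1 - ln \<tau>" by linarith
  have "(1 - ln \<tau>) powr (-1/p) \<le> ((2 ^ j) * (1/2::real)) powr (-1/p)"
    using le p by (intro powr_mono2') auto
  also have "\<dots> = (2 ^ j) powr (-1/p) * (1/2) powr (-1/p)" by (rule powr_mult)
  also have "(1/2::real) powr (-1/p) = 2 powr (1/p)" by (simp add: powr_divide powr_minus_divide)
  also have "2 powr (1/p) \<le> (2::real)" using powr_mono[of "1/p" 1 2] p by simp
  then have "(2 ^ j) powr (-1/p) * 2 powr (1/p) \<le> (2 ^ j) powr (-1/p) * (2::real)"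
    by (intro mult_left_mono) auto
  finally show ?thesis by (simp add: mult.commute)
qed

context
  fixes \<Omega> :: "'a::euclidean_space set" and p :: real
  assumes OmS: "\<Omega> \<in> sets lebesgue" and Om1: "emeasure lebesgue \<Omega> = 1" and p: "1 < p"
begin

lemmas dec_attain_F = dec_attain[OF OmS Om1]
lemmas dec_nonneg_F = dec_nonneg[OF OmS Om1]
lemmas dec_antimono_F = dec_antimono[OF OmS Om1]
lemmas dec_dom_F = dec_dom[OF OmS Om1]
lemmas dec_bound_F = dec_bound[OF OmS Om1]
lemmas dec_zero_F = dec_zero[OF OmS Om1]
lemmas meas_dec_F = meas_dec[OF OmS Om1 p]
lemmas bk_fin_F = bk_fin[OF OmS Om1 p]

definition lam :: "('a \<Rightarrow> real) \<Rightarrow> nat \<Rightarrow> real" where "lam f k = dec_rearr \<Omega> f (tt k)"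
definition gA :: "('a \<Rightarrow> real) \<Rightarrow> nat \<Rightarrow> 'a \<Rightarrow> real" where
  "gA f k x = (if lam f k < \<bar>f x\<bar> then f x else 0)"
definition gB :: "('a \<Rightarrow> real) \<Rightarrow> nat \<Rightarrow> 'a \<Rightarrow> real" where
  "gB f k x = (if lam f k < \<bar>f x\<bar> then 0 else f x)"
definition xx :: "('a \<Rightarrow> real) \<Rightarrow> nat \<Rightarrow> real" where
  "xx f i = enn2real (bk \<Omega> p f i) powr (1/p)"

lemma bk_eq: "f \<in> borel_measurable (lebesgue_on \<Omega>) \<Longrightarrow> bk \<Omega> p f i = ennreal (enn2real (bk \<Omega> p f i))"
  using bk_fin_F[of f i] by (simp add: less_top)

lemma bk_top: "f \<in> borel_measurable (lebesgue_on \<Omega>) \<Longrightarrow> bk \<Omega> p f k < top"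
  using bk_fin_F[of f k] by (simp add: infinity_ennreal_def)

lemma gA_meas: assumes [measurable]: "f \<in> borel_measurable (lebesgue_on \<Omega>)"
  shows "gA f k \<in> borel_measurable (lebesgue_on \<Omega>)"
  unfolding gA_def by measurable
lemma gB_meas: assumes [measurable]: "f \<in> borel_measurable (lebesgue_on \<Omega>)"
  shows "gB f k \<in> borel_measurable (lebesgue_on \<Omega>)"
  unfolding gB_def by measurable

lemmas bk_def_F = bk_def[OF OmS Om1 p]

lemma lam_nonneg: "f \<in> borel_measurable (lebesgue_on \<Omega>) \<Longrightarrow> 0 \<le> lam f k"
  unfolding lam_def using dec_nonneg_F tt_pos by blast

lemma lam_bound:
  assumes fm: "f \<in> borel_measurable (lebesgue_on \<Omega>)"
  shows "lam f k powr p * tt k \<le> 2 * enn2real (bk \<Omega> p f k)"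
proof -
  define l where "l = lam f k"
  have l0: "0 \<le> l" using lam_nonneg[OF fm] by (simp add: l_def)
  have a: "0 < tt (Suc k)" "tt (Suc k) \<le> tt k / 2" using tt_pos tt_half by auto
  have "ennreal (l powr p) * ennreal (tt k - tt (Suc k)) = (\<integral>\<^sup>+ s. ennreal (l powr p) * indicator {tt (Suc k)..tt k} s \<partial>lborel)"
    using a tt_pos[of k] by (intro nn_int_const[symmetric]) auto
  also have "\<dots> \<le> bk \<Omega> p f k" unfolding bk_def_F
  proof (intro nn_integral_mono)
    fix s show "ennreal (l powr p) * indicator {tt (Suc k)..tt k} s \<le> ennreal (dec_rearr \<Omega> f s powr p) * indicator {tt (Suc k)..tt k} s"
    proof (cases "s \<in> {tt (Suc k)..tt k}")
      case True
      then have "l \<le> dec_rearr \<Omega> f s" unfolding l_def lam_def using a by (intro dec_antimono_F[OF fm]) auto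
      then show ?thesis using True l0 p by (auto intro!: ennreal_leI powr_mono2)
    qed simp
  qed
  finally have le1: "ennreal (l powr p * (tt k - tt (Suc k))) \<le> bk \<Omega> p f k"
    using a by (simp add: ennreal_mult)
  have "l powr p * (tt k - tt (Suc k)) \<le> enn2real (bk \<Omega> p f k)"
    using enn2real_mono[OF le1 bk_top[OF fm]] a by simp
  moreover have "l powr p * tt k \<le> 2 * (l powr p * (tt k - tt (Suc k)))"
  proof -
    have "tt k \<le> 2 * (tt k - tt (Suc k))" using a by simp
    then have "l powr p * tt k \<le> l powr p * (2 * (tt k - tt (Suc k)))" by (intro mult_left_mono) auto
    then show ?thesis by (simp add: algebra_simps)
  qed
  ultimately show ?thesis by (simp add: l_def)
qed

lemma block_le:
  fixes G :: "real \<Rightarrow> real"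
  assumes fm: "f \<in> borel_measurable (lebesgue_on \<Omega>)" and kj: "k \<le> j"
    and G: "\<And>s. tt (Suc j) \<le> s \<Longrightarrow> s \<le> tt k \<Longrightarrow> 0 \<le> G s \<and> G s \<le> dec_rearr \<Omega> f s"
  shows "(\<integral>\<^sup>+ s. ennreal (G s powr p) * indicator {tt (Suc j)..tt k} s \<partial>lborel)
     \<le> ennreal (\<Sum>i\<in>{k..j}. enn2real (bk \<Omega> p f i))"
proof -
  have "(\<integral>\<^sup>+ s. ennreal (G s powr p) * indicator {tt (Suc j)..tt k} s \<partial>lborel)
     \<le> (\<integral>\<^sup>+ s. (\<Sum>i\<in>{k..j}. ennreal (dec_rearr \<Omega> f s powr p) * indicator {tt (Suc i)..tt i} s) \<partial>lborel)"
  proof (rule nn_integral_mono)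
    fix s
    show "ennreal (G s powr p) * indicator {tt (Suc j)..tt k} s
        \<le> (\<Sum>i\<in>{k..j}. ennreal (dec_rearr \<Omega> f s powr p) * indicator {tt (Suc i)..tt i} s)"
    proof (cases "s \<in> {tt (Suc j)..tt k}")
      case True
      then have s: "tt (Suc j) \<le> s" "s \<le> tt k" by auto
      have s0: "0 < s" using s tt_pos[of "Suc j"] by linarith
      obtain i where i: "k \<le> i" "tt (Suc i) \<le> s" "s \<le> tt i" "\<forall>j'\<ge>k. tt (Suc j') \<le> s \<longrightarrow> i \<le> j'"
        using tt_cover[OF s0 s(2)] by blast
      have ij: "i \<le> j" using i(4) kj s(1) by blast
      have "G s powr p \<le> dec_rearr \<Omega> f s powr p" using G[OF s] p by (intro powr_mono2) auto
      then have "ennreal (G s powr p) * indicator {tt (Suc j)..tt k} s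
          \<le> ennreal (dec_rearr \<Omega> f s powr p) * indicator {tt (Suc i)..tt i} s"
        using True i by (auto intro: ennreal_leI)
      also have "\<dots> \<le> (\<Sum>i\<in>{k..j}. ennreal (dec_rearr \<Omega> f s powr p) * indicator {tt (Suc i)..tt i} s)"
        using i(1) ij by (intro member_le_sum) auto
      finally show ?thesis .
    qed simp
  qed
  also have "\<dots> = (\<Sum>i\<in>{k..j}. bk \<Omega> p f i)"
    unfolding bk_def_F by (rule nn_integral_sum) (simp add: meas_dec_F[OF fm] tt_pos)
  also have "\<dots> = ennreal (\<Sum>i\<in>{k..j}. enn2real (bk \<Omega> p f i))"
    by (subst bk_eq[OF fm]) (simp add: sum_ennreal)
  finally show ?thesis .
qed

lemma gA_props:
  assumes fm: "f \<in> borel_measurable (lebesgue_on \<Omega>)" and s: "0 < s"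
  shows "0 \<le> dec_rearr \<Omega> (gA f k) s" "dec_rearr \<Omega> (gA f k) s \<le> dec_rearr \<Omega> f s"
    "tt k \<le> s \<Longrightarrow> dec_rearr \<Omega> (gA f k) s = 0"
proof -
  show g0: "0 \<le> dec_rearr \<Omega> (gA f k) s" by (rule dec_nonneg_F[OF gA_meas[OF fm] s])
  show "dec_rearr \<Omega> (gA f k) s \<le> dec_rearr \<Omega> f s"
    by (rule dec_dom_F[OF fm gA_meas[OF fm] _ s]) (simp add: gA_def)
  assume ts: "tt k \<le> s"
  have "dec_rearr \<Omega> (gA f k) s \<le> 0"
  proof (rule dec_zero_F[OF fm gA_meas[OF fm]])
    show "\<And>x. x \<in> \<Omega> \<Longrightarrow> gA f k x \<noteq> 0 \<Longrightarrow> lam f k < \<bar>f x\<bar>" by (auto simp: gA_def split: if_splits)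
    show "mu \<Omega> f (lam f k) \<le> s" using dec_attain_F[OF fm tt_pos[of k]] ts by (simp add: lam_def)
  qed
  then show "dec_rearr \<Omega> (gA f k) s = 0" using g0 by simp
qed

lemma gB_props:
  assumes fm: "f \<in> borel_measurable (lebesgue_on \<Omega>)" and s: "0 < s"
  shows "0 \<le> dec_rearr \<Omega> (gB f k) s" "dec_rearr \<Omega> (gB f k) s \<le> dec_rearr \<Omega> f s"
    "dec_rearr \<Omega> (gB f k) s \<le> lam f k"
proof -
  show "0 \<le> dec_rearr \<Omega> (gB f k) s" by (rule dec_nonneg_F[OF gB_meas[OF fm] s])
  show "dec_rearr \<Omega> (gB f k) s \<le> dec_rearr \<Omega> f s"
    by (rule dec_dom_F[OF fm gB_meas[OF fm] _ s]) (simp add: gB_def)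
  show "dec_rearr \<Omega> (gB f k) s \<le> lam f k"
    by (rule dec_bound_F[OF _ lam_nonneg[OF fm]]) (use s lam_nonneg[OF fm] in \<open>auto simp: gB_def\<close>)
qed

lemma U1:
  assumes fm: "f \<in> borel_measurable (lebesgue_on \<Omega>)"
  shows "grand_norm \<Omega> p (gA f k) \<le> 2 * (\<Sum>i. if k \<le> i then ennreal ((2 ^ i) powr (-1/p) * xx f i) else 0)"
  unfolding grand_norm_def
proof (rule SUP_least)
  fix \<tau> :: real assume "\<tau> \<in> {0<..<1}"
  then have t: "0 < \<tau>" "\<tau> < 1" by auto
  define G0 where "G0 = dec_rearr \<Omega> (gA f k)"
  define RHS where "RHS = 2 * (\<Sum>i. if k \<le> i then ennreal ((2 ^ i) powr (-1/p) * xx f i) else 0)"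
  have p0: "0 < p" using p by simp
  show "ennreal ((1 - ln \<tau>) powr (-1/p)) * enn_powr (\<integral>\<^sup>+ s\<in>{\<tau>..1}. ennreal (dec_rearr \<Omega> (gA f k) s powr p) \<partial>lborel) (1/p)
      \<le> RHS"
  proof (cases "tt k \<le> \<tau>")
    case True
    have "(\<lambda>s. ennreal (dec_rearr \<Omega> (gA f k) s powr p) * indicator {\<tau>..1} s) = (\<lambda>s. 0)"
    proof (rule ext)
      fix s show "ennreal (dec_rearr \<Omega> (gA f k) s powr p) * indicator {\<tau>..1} s = 0"
      proof (cases "s \<in> {\<tau>..1}")
        case True
        then have "0 < s" "tt k \<le> s" using t \<open>tt k \<le> \<tau>\<close> by auto
        then show ?thesis using gA_props(3)[OF fm] by simp
      qed simp
    qed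
    then show ?thesis using p0 by (simp del: times_ennreal.rep_eq)
  next
    case False
    then have tk: "\<tau> \<le> tt k" by simp
    obtain j where j: "k \<le> j" "tt (Suc j) \<le> \<tau>" "\<tau> \<le> tt j"
      using tt_cover[OF t(1) tk] by blast
    have "(\<integral>\<^sup>+ s\<in>{\<tau>..1}. ennreal (G0 s powr p) \<partial>lborel)
        \<le> (\<integral>\<^sup>+ s. ennreal (G0 s powr p) * indicator {tt (Suc j)..tt k} s \<partial>lborel)"
    proof (rule nn_integral_mono)
      fix s show "ennreal (G0 s powr p) * indicator {\<tau>..1} s \<le> ennreal (G0 s powr p) * indicator {tt (Suc j)..tt k} s"
      proof (cases "s \<in> {\<tau>..1}")
        case True
        then have s0: "0 < s" using t by auto
        show ?thesis
        proof (cases "s \<le> tt k")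
          case True then show ?thesis using \<open>s \<in> {\<tau>..1}\<close> j by (auto simp: indicator_def)
        next
          case False then show ?thesis using gA_props(3)[OF fm s0] by (simp add: G0_def)
        qed
      qed simp
    qed
    also have "\<dots> \<le> ennreal (\<Sum>i\<in>{k..j}. enn2real (bk \<Omega> p f i))"
    proof (rule block_le[OF fm j(1)])
      fix s assume s: "tt (Suc j) \<le> s" "s \<le> tt k"
      then have "0 < s" using tt_pos[of "Suc j"] by linarith
      then show "0 \<le> G0 s \<and> G0 s \<le> dec_rearr \<Omega> f s" using gA_props(1,2)[OF fm] by (simp add: G0_def)
    qed
    finally have I: "(\<integral>\<^sup>+ s\<in>{\<tau>..1}. ennreal (G0 s powr p) \<partial>lborel) \<le> ennreal (\<Sum>i\<in>{k..j}. enn2real (bk \<Omega> p f i))" .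
    have "enn_powr (\<integral>\<^sup>+ s\<in>{\<tau>..1}. ennreal (G0 s powr p) \<partial>lborel) (1/p)
        \<le> ennreal ((\<Sum>i\<in>{k..j}. enn2real (bk \<Omega> p f i)) powr (1/p))"
      using enn_powr_mono[OF _ I, of "1/p"] p0 by (simp add: enn_powr_ennreal sum_nonneg)
    also have "\<dots> \<le> ennreal (\<Sum>i\<in>{k..j}. xx f i)"
      unfolding xx_def using p by (intro ennreal_leI powr_sum_subadd) auto
    finally have E: "enn_powr (\<integral>\<^sup>+ s\<in>{\<tau>..1}. ennreal (G0 s powr p) \<partial>lborel) (1/p) \<le> ennreal (\<Sum>i\<in>{k..j}. xx f i)" .
    have W: "(1 - ln \<tau>) powr (-1/p) \<le> 2 * (2 ^ j) powr (-1/p)" by (rule w_bound[OF p t(1) j(3)])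
    have "ennreal ((1 - ln \<tau>) powr (-1/p)) * enn_powr (\<integral>\<^sup>+ s\<in>{\<tau>..1}. ennreal (G0 s powr p) \<partial>lborel) (1/p)
        \<le> ennreal (2 * (2 ^ j) powr (-1/p)) * ennreal (\<Sum>i\<in>{k..j}. xx f i)"
      by (intro mult_mono E ennreal_leI W) auto
    also have "\<dots> = ennreal (2 * (\<Sum>i\<in>{k..j}. (2 ^ j) powr (-1/p) * xx f i))"
    proof -
      have "ennreal (2 * (2 ^ j) powr (-1/p)) * ennreal (\<Sum>i\<in>{k..j}. xx f i)
          = ennreal (2 * (2 ^ j) powr (-1/p) * (\<Sum>i\<in>{k..j}. xx f i))"
        by (rule ennreal_mult[symmetric]) (auto simp: xx_def intro: sum_nonneg)
      also have "2 * (2 ^ j) powr (-1/p) * (\<Sum>i\<in>{k..j}. xx f i) = 2 * (\<Sum>i\<in>{k..j}. (2 ^ j) powr (-1/p) * xx f i)"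
        by (simp add: sum_distrib_left mult.assoc)
      finally show ?thesis .
    qed
    also have "\<dots> \<le> ennreal (2 * (\<Sum>i\<in>{k..j}. (2 ^ i) powr (-1/p) * xx f i))"
    proof (intro ennreal_leI mult_left_mono sum_mono)
      fix i assume "i \<in> {k..j}"
      then have "(2::real) ^ i \<le> 2 ^ j" by (intro power_increasing) auto
      then have "(2 ^ j) powr (-1/p) \<le> ((2::real) ^ i) powr (-1/p)" using p by (intro powr_mono2') auto
      then show "(2 ^ j) powr (-1/p) * xx f i \<le> (2 ^ i) powr (-1/p) * xx f i"
        by (intro mult_right_mono) (auto simp: xx_def)
    qed simp
    also have "\<dots> = 2 * (\<Sum>i\<in>{k..j}. if k \<le> i then ennreal ((2 ^ i) powr (-1/p) * xx f i) else 0)"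
    proof -
      have "(\<Sum>i\<in>{k..j}. if k \<le> i then ennreal ((2 ^ i) powr (-1/p) * xx f i) else 0)
          = (\<Sum>i\<in>{k..j}. ennreal ((2 ^ i) powr (-1/p) * xx f i))" by (rule sum.cong) auto
      also have "\<dots> = ennreal (\<Sum>i\<in>{k..j}. (2 ^ i) powr (-1/p) * xx f i)"
        by (rule sum_ennreal) (simp add: xx_def)
      finally have e: "(\<Sum>i\<in>{k..j}. if k \<le> i then ennreal ((2 ^ i) powr (-1/p) * xx f i) else 0)
          = ennreal (\<Sum>i\<in>{k..j}. (2 ^ i) powr (-1/p) * xx f i)" .
      have "ennreal (2 * (\<Sum>i\<in>{k..j}. (2 ^ i) powr (-1/p) * xx f i))
          = ennreal 2 * ennreal (\<Sum>i\<in>{k..j}. (2 ^ i) powr (-1/p) * xx f i)"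
        by (rule ennreal_mult) (auto simp: xx_def intro: sum_nonneg)
      then show ?thesis unfolding e by simp
    qed
    also have "\<dots> \<le> RHS" unfolding RHS_def
      by (intro mult_left_mono sum_le_suminf) auto
    finally show ?thesis by (simp add: G0_def)
  qed
qed

lemma H_small:
  assumes fm: "f \<in> borel_measurable (lebesgue_on \<Omega>)" and t: "0 < \<tau>"
  shows "(\<integral>\<^sup>+ s\<in>{0<..\<tau>}. ennreal (dec_rearr \<Omega> (gB f k) s powr p) \<partial>lborel) \<le> ennreal (lam f k powr p * \<tau>)"
proof -
  have "(\<integral>\<^sup>+ s\<in>{0<..\<tau>}. ennreal (dec_rearr \<Omega> (gB f k) s powr p) \<partial>lborel)
      \<le> (\<integral>\<^sup>+ s. ennreal (lam f k powr p) * indicator {0<..\<tau>} s \<partial>lborel)"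
  proof (rule nn_integral_mono)
    fix s show "ennreal (dec_rearr \<Omega> (gB f k) s powr p) * indicator {0<..\<tau>} s \<le> ennreal (lam f k powr p) * indicator {0<..\<tau>} s"
    proof (cases "s \<in> {0<..\<tau>}")
      case True
      then have "0 < s" by simp
      then have "dec_rearr \<Omega> (gB f k) s powr p \<le> lam f k powr p"
        using gB_props(1,3)[OF fm] p by (intro powr_mono2) auto
      then show ?thesis using True by (auto intro: ennreal_leI)
    qed simp
  qed
  also have "\<dots> = ennreal (lam f k powr p) * ennreal (\<tau> - 0)" using t by (intro nn_int_const_Ioc) auto
  also have "\<dots> = ennreal (lam f k powr p * \<tau>)" using t by (simp add: ennreal_mult)
  finally show ?thesis .
qed

lemma H_big:
  assumes fm: "f \<in> borel_measurable (lebesgue_on \<Omega>)" and jk: "j < k" and t: "0 < \<tau>" "\<tau> \<le> tt j"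
  shows "(\<integral>\<^sup>+ s\<in>{0<..\<tau>}. ennreal (dec_rearr \<Omega> (gB f k) s powr p) \<partial>lborel)
     \<le> ennreal (2 * (\<Sum>i\<in>{j..k}. enn2real (bk \<Omega> p f i)))"
proof -
  obtain k' where k': "k = Suc k'" "j \<le> k'" using jk by (cases k) auto
  define G1 where "G1 = dec_rearr \<Omega> (gB f k)"
  define l where "l = lam f k"
  have l0: "0 \<le> l" using lam_nonneg[OF fm] by (simp add: l_def)
  have "(\<integral>\<^sup>+ s\<in>{0<..\<tau>}. ennreal (G1 s powr p) \<partial>lborel)
      \<le> (\<integral>\<^sup>+ s. ennreal (l powr p) * indicator {0<..tt k} s + ennreal (G1 s powr p) * indicator {tt (Suc k')..tt j} s \<partial>lborel)"
  proof (rule nn_integral_mono)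
    fix s show "ennreal (G1 s powr p) * indicator {0<..\<tau>} s
        \<le> ennreal (l powr p) * indicator {0<..tt k} s + ennreal (G1 s powr p) * indicator {tt (Suc k')..tt j} s"
    proof (cases "s \<in> {0<..\<tau>}")
      case True
      then have s0: "0 < s" by simp
      show ?thesis
      proof (cases "s \<le> tt k")
        case True
        then have "G1 s powr p \<le> l powr p"
          using gB_props(1,3)[OF fm s0] p by (intro powr_mono2) (auto simp: G1_def l_def)
        have "ennreal (G1 s powr p) * indicator {0<..\<tau>} s = ennreal (G1 s powr p)"
          using \<open>s \<in> {0<..\<tau>}\<close> by simp
        also have "\<dots> \<le> ennreal (l powr p)" by (rule ennreal_leI) fact
        also have "\<dots> = ennreal (l powr p) * indicator {0<..tt k} s" using True s0 by simp
        also have "\<dots> \<le> ennreal (l powr p) * indicator {0<..tt k} s + ennreal (G1 s powr p) * indicator {tt (Suc k')..tt j} s"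
          by (rule add_increasing2) auto
        finally show ?thesis .
      next
        case False
        then have "s \<in> {tt (Suc k')..tt j}" using \<open>s \<in> {0<..\<tau>}\<close> t k' by auto
        then show ?thesis using \<open>s \<in> {0<..\<tau>}\<close> by (auto intro: add_increasing)
      qed
    qed simp
  qed
  also have "\<dots> = (\<integral>\<^sup>+ s. ennreal (l powr p) * indicator {0<..tt k} s \<partial>lborel)
      + (\<integral>\<^sup>+ s. ennreal (G1 s powr p) * indicator {tt (Suc k')..tt j} s \<partial>lborel)"
    unfolding G1_def by (rule nn_integral_add) (auto intro!: meas_dec_F[OF gB_meas[OF fm]] tt_pos)
  also have "(\<integral>\<^sup>+ s. ennreal (l powr p) * indicator {0<..tt k} s \<partial>lborel) = ennreal (l powr p * tt k)"
    using tt_pos[of k] by (simp add: nn_int_const_Ioc ennreal_mult)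
  also have "(\<integral>\<^sup>+ s. ennreal (G1 s powr p) * indicator {tt (Suc k')..tt j} s \<partial>lborel)
      \<le> ennreal (\<Sum>i\<in>{j..k'}. enn2real (bk \<Omega> p f i))"
  proof (rule block_le[OF fm k'(2)])
    fix s assume s: "tt (Suc k') \<le> s" "s \<le> tt j"
    then have "0 < s" using tt_pos[of "Suc k'"] by linarith
    then show "0 \<le> G1 s \<and> G1 s \<le> dec_rearr \<Omega> f s" using gB_props(1,2)[OF fm] by (simp add: G1_def)
  qed
  also have "ennreal (l powr p * tt k) + ennreal (\<Sum>i\<in>{j..k'}. enn2real (bk \<Omega> p f i))
      = ennreal (l powr p * tt k + (\<Sum>i\<in>{j..k'}. enn2real (bk \<Omega> p f i)))"
    by (rule ennreal_plus[symmetric]) (auto intro: sum_nonneg simp: tt_pos less_imp_le)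
  also have "l powr p * tt k + (\<Sum>i\<in>{j..k'}. enn2real (bk \<Omega> p f i)) \<le> 2 * (\<Sum>i\<in>{j..k}. enn2real (bk \<Omega> p f i))"
  proof -
    have "{j..k} = insert k {j..k'}" using k' by auto
    then have "(\<Sum>i\<in>{j..k}. enn2real (bk \<Omega> p f i)) = enn2real (bk \<Omega> p f k) + (\<Sum>i\<in>{j..k'}. enn2real (bk \<Omega> p f i))"
      using k' by simp
    moreover have "l powr p * tt k \<le> 2 * enn2real (bk \<Omega> p f k)" using lam_bound[OF fm] by (simp add: l_def)
    moreover have "0 \<le> (\<Sum>i\<in>{j..k'}. enn2real (bk \<Omega> p f i))" by (intro sum_nonneg) auto
    ultimately show ?thesis by linarith
  qed
  then have "ennreal (l powr p * tt k + (\<Sum>i\<in>{j..k'}. enn2real (bk \<Omega> p f i))) \<le> ennreal (2 * (\<Sum>i\<in>{j..k}. enn2real (bk \<Omega> p f i)))"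
    by (rule ennreal_leI)
  finally show ?thesis by (simp add: G1_def add_mono)
qed

end

lemma geom_le:
  fixes a :: real assumes a: "1 < a"
  shows "(\<Sum>j\<le>i. a ^ j) \<le> a / (a - 1) * a ^ i"
proof (induction i)
  case 0 then show ?case using a by (simp add: field_simps)
next
  case (Suc i)
  have "(\<Sum>j\<le>Suc i. a ^ j) = (\<Sum>j\<le>i. a ^ j) + a ^ Suc i" by simp
  also have "\<dots> \<le> a / (a - 1) * a ^ i + a ^ Suc i" using Suc by simp
  also have "\<dots> = a / (a - 1) * a ^ Suc i" using a by (simp add: field_simps)
  finally show ?case .
qed

lemma U2_core:
  fixes x :: "nat \<Rightarrow> real" and p :: real
  assumes x: "\<And>i. 0 \<le> x i" and p: "1 < p"
  shows "(\<Sum>j<k. 4 * (2 ^ j) powr (-1/p) * (\<Sum>i\<in>{j..k}. x i) * (2 ^ j * ln 2))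
     \<le> 4 * (2 powr (1 - 1/p) / (2 powr (1 - 1/p) - 1)) * (\<Sum>i\<le>k. (2 ^ i) powr (1 - 1/p) * x i)"
proof -
  define a where "a = (2::real) powr (1 - 1/p)"
  have a: "1 < a" unfolding a_def using p by (intro gr_one_powr) auto
  have pw: "((2::real) ^ j) powr (1 - 1/p) = a ^ j" for j
    by (simp add: a_def powr_realpow[symmetric] powr_powr mult.commute)
  have t: "4 * (2 ^ j) powr (-1/p) * (\<Sum>i\<in>{j..k}. x i) * (2 ^ j * ln 2) \<le> 4 * a ^ j * (\<Sum>i\<in>{j..k}. x i)" for j
  proof -
    have "((2::real) ^ j) powr (-1/p) * 2 ^ j = (2 ^ j) powr (1 - 1/p)"
      by (simp add: powr_diff powr_minus_divide field_simps)
    then have e: "((2::real) ^ j) powr (-1/p) * 2 ^ j = a ^ j" using pw by simp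
    have sx: "0 \<le> (\<Sum>i\<in>{j..k}. x i)" using x by (simp add: sum_nonneg)
    have "4 * (2 ^ j) powr (-1/p) * (\<Sum>i\<in>{j..k}. x i) * (2 ^ j * ln 2)
        = 4 * ((2 ^ j) powr (-1/p) * 2 ^ j) * (\<Sum>i\<in>{j..k}. x i) * ln 2" by (simp add: mult_ac)
    also have "\<dots> \<le> 4 * ((2 ^ j) powr (-1/p) * 2 ^ j) * (\<Sum>i\<in>{j..k}. x i) * 1"
      using ln_2_less_1 sx by (intro mult_left_mono) auto
    finally show ?thesis unfolding e by simp
  qed
  have "(\<Sum>j<k. 4 * (2 ^ j) powr (-1/p) * (\<Sum>i\<in>{j..k}. x i) * (2 ^ j * ln 2))
      \<le> (\<Sum>j<k. 4 * a ^ j * (\<Sum>i\<in>{j..k}. x i))" by (rule sum_mono[OF t])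
  also have "\<dots> \<le> (\<Sum>j\<le>k. 4 * a ^ j * (\<Sum>i\<in>{j..k}. x i))"
    using a x by (intro sum_mono2) (auto intro!: sum_nonneg)
  also have "\<dots> = 4 * (\<Sum>j\<le>k. \<Sum>i\<in>{i\<in>{..k}. j \<le> i}. a ^ j * x i)"
  proof -
    have "{i\<in>{..k}. j \<le> i} = {j..k}" for j by auto
    then show ?thesis by (simp add: sum_distrib_left mult.assoc)
  qed
  also have "(\<Sum>j\<le>k. \<Sum>i\<in>{i\<in>{..k}. j \<le> i}. a ^ j * x i) = (\<Sum>i\<le>k. \<Sum>j\<in>{j\<in>{..k}. j \<le> i}. a ^ j * x i)"
    by (rule sum.swap_restrict) auto
  also have "\<dots> = (\<Sum>i\<le>k. (\<Sum>j\<le>i. a ^ j) * x i)"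
  proof (rule sum.cong)
    fix i assume "i \<in> {..k}"
    then have "{j\<in>{..k}. j \<le> i} = {..i}" by auto
    then show "(\<Sum>j\<in>{j\<in>{..k}. j \<le> i}. a ^ j * x i) = (\<Sum>j\<le>i. a ^ j) * x i" by (simp add: sum_distrib_right)
  qed simp
  also have "\<dots> \<le> (\<Sum>i\<le>k. a / (a - 1) * a ^ i * x i)"
    using geom_le[OF a] x by (intro sum_mono mult_right_mono) auto
  also have "\<dots> = a / (a - 1) * (\<Sum>i\<le>k. (2 ^ i) powr (1 - 1/p) * x i)"
    by (simp add: pw sum_distrib_left mult.assoc)
  finally show ?thesis using a by (simp add: a_def mult.assoc)
qed

context
  fixes \<Omega> :: "'a::euclidean_space set" and p :: real
  assumes OmS: "\<Omega> \<in> sets lebesgue" and Om1: "emeasure lebesgue \<Omega> = 1" and p: "1 < p"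
begin

lemmas H_small_G = H_small[OF OmS Om1 p]
lemmas H_big_G = H_big[OF OmS Om1 p]
lemmas xx_def_G = xx_def[OF OmS Om1 p]
lemmas lam_def_G = lam_def[OF OmS Om1 p]
lemmas lam_nonneg_G = lam_nonneg[OF OmS Om1 p]
lemmas lam_bound_G = lam_bound[OF OmS Om1 p]

lemma U2:
  assumes fm: "f \<in> borel_measurable (lebesgue_on \<Omega>)"
  shows "small_norm \<Omega> p (gB \<Omega> f k) \<le> ennreal (p * lam \<Omega> f k * tt k powr (1/p)
     + (\<Sum>j<k. 4 * (2 ^ j) powr (-1/p) * (\<Sum>i\<in>{j..k}. xx \<Omega> p f i) * (2 ^ j * ln 2)))"
proof -
  define l where "l = lam \<Omega> f k"
  have l0: "0 \<le> l" using lam_nonneg_G[OF fm] by (simp add: l_def)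
  have p0: "0 < p" using p by simp
  define H where "H \<tau> = (\<integral>\<^sup>+ s\<in>{0<..\<tau>}. ennreal (dec_rearr \<Omega> (gB \<Omega> f k) s powr p) \<partial>lborel)" for \<tau>
  define c where "c j = 4 * (2 ^ j) powr (-1/p) * (\<Sum>i\<in>{j..k}. xx \<Omega> p f i)" for j
  have c0: "0 \<le> c j" for j unfolding c_def xx_def_G
    by (intro mult_nonneg_nonneg sum_nonneg) auto
  define A where "A \<tau> = ennreal (l * \<tau> powr (1/p - 1)) * indicator {0..tt k} \<tau>" for \<tau>
  define B where "B j \<tau> = ennreal (c j) * (ennreal (1 / \<tau>) * indicator {tt (Suc j)..tt j} \<tau>)" for j \<tau>
  have "small_norm \<Omega> p (gB \<Omega> f k) \<le> (\<integral>\<^sup>+ \<tau>. A \<tau> + (\<Sum>j<k. B j \<tau>) \<partial>lborel)"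
    unfolding small_norm_def H_def[symmetric]
  proof (rule nn_integral_mono)
    fix \<tau> :: real
    show "ennreal ((1 - ln \<tau>) powr (-1/p)) * enn_powr (H \<tau>) (1/p) * ennreal (1 / \<tau>) * indicator {0<..<1} \<tau>
        \<le> A \<tau> + (\<Sum>j<k. B j \<tau>)"
    proof (cases "\<tau> \<in> {0<..<1}")
      case False then show ?thesis by simp
    next
      case True
      then have t: "0 < \<tau>" "\<tau> < 1" by auto
      have lt0: "ln \<tau> < 0" using t by (intro ln_less_zero) auto
      show ?thesis
      proof (cases "\<tau> \<le> tt k")
        case True
        have w1: "(1 - ln \<tau>) powr (-1/p) \<le> 1"
          using powr_mono2'[of "-1/p" 1 "1 - ln \<tau>"] lt0 p0 by simp
        have "enn_powr (H \<tau>) (1/p) \<le> enn_powr (ennreal (l powr p * \<tau>)) (1/p)"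
          using H_small_G[OF fm t(1), of k] p0 by (intro enn_powr_mono) (auto simp: H_def l_def)
        also have "\<dots> = ennreal (l * \<tau> powr (1/p))"
          using l0 t p0 by (simp add: enn_powr_ennreal powr_mult powr_powr)
        finally have Hle: "enn_powr (H \<tau>) (1/p) \<le> ennreal (l * \<tau> powr (1/p))" .
        have "ennreal ((1 - ln \<tau>) powr (-1/p)) * enn_powr (H \<tau>) (1/p) * ennreal (1 / \<tau>) * indicator {0<..<1} \<tau>
            \<le> ennreal 1 * ennreal (l * \<tau> powr (1/p)) * ennreal (1 / \<tau>)"
        proof -
          have "ennreal ((1 - ln \<tau>) powr (-1/p)) * enn_powr (H \<tau>) (1/p) * ennreal (1 / \<tau>)
            \<le> ennreal 1 * ennreal (l * \<tau> powr (1/p)) * ennreal (1 / \<tau>)"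
            by (intro mult_right_mono mult_mono ennreal_leI w1 Hle) auto
          then show ?thesis using \<open>\<tau> \<in> {0<..<1}\<close> by simp
        qed
        also have "\<dots> = ennreal (l * \<tau> powr (1/p - 1))"
          using t l0 by (simp add: ennreal_mult[symmetric] powr_diff)
        also have "\<dots> = A \<tau>" using True t by (simp add: A_def)
        also have "\<dots> \<le> A \<tau> + (\<Sum>j<k. B j \<tau>)" by simp
        finally show ?thesis .
      next
        case False
        obtain j where j: "tt (Suc j) \<le> \<tau>" "\<tau> \<le> tt j" using tt_cover[of \<tau> 0] t by auto
        have jk: "j < k"
        proof (rule ccontr)
          assume "\<not> j < k"
          then have "tt j \<le> tt k" by (intro tt_antimono) auto
          then show False using j False by linarith
        qed
        have W: "(1 - ln \<tau>) powr (-1/p) \<le> 2 * (2 ^ j) powr (-1/p)" by (rule w_bound[OF p t(1) j(2)])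
        have "enn_powr (H \<tau>) (1/p) \<le> enn_powr (ennreal (2 * (\<Sum>i\<in>{j..k}. enn2real (bk \<Omega> p f i)))) (1/p)"
          using H_big_G[OF fm jk t(1) j(2)] p0 by (intro enn_powr_mono) (auto simp: H_def)
        also have "\<dots> = ennreal (2 powr (1/p) * (\<Sum>i\<in>{j..k}. enn2real (bk \<Omega> p f i)) powr (1/p))"
          by (simp add: enn_powr_ennreal sum_nonneg powr_mult)
        also have "\<dots> \<le> ennreal (2 * (\<Sum>i\<in>{j..k}. xx \<Omega> p f i))"
        proof (rule ennreal_leI, rule mult_mono)
          show "2 powr (1/p) \<le> (2::real)" using powr_mono[of "1/p" 1 2] p by simp
          show "(\<Sum>i\<in>{j..k}. enn2real (bk \<Omega> p f i)) powr (1/p) \<le> (\<Sum>i\<in>{j..k}. xx \<Omega> p f i)"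
            unfolding xx_def_G using p by (intro powr_sum_subadd) auto
        qed (auto simp: xx_def_G intro: sum_nonneg)
        finally have Hle: "enn_powr (H \<tau>) (1/p) \<le> ennreal (2 * (\<Sum>i\<in>{j..k}. xx \<Omega> p f i))" .
        have "ennreal ((1 - ln \<tau>) powr (-1/p)) * enn_powr (H \<tau>) (1/p) * ennreal (1 / \<tau>) * indicator {0<..<1} \<tau>
            \<le> ennreal (2 * (2 ^ j) powr (-1/p)) * ennreal (2 * (\<Sum>i\<in>{j..k}. xx \<Omega> p f i)) * ennreal (1 / \<tau>)"
        proof -
          have "ennreal ((1 - ln \<tau>) powr (-1/p)) * enn_powr (H \<tau>) (1/p) * ennreal (1 / \<tau>)
            \<le> ennreal (2 * (2 ^ j) powr (-1/p)) * ennreal (2 * (\<Sum>i\<in>{j..k}. xx \<Omega> p f i)) * ennreal (1 / \<tau>)"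
            by (intro mult_right_mono mult_mono ennreal_leI W Hle) auto
          then show ?thesis using \<open>\<tau> \<in> {0<..<1}\<close> by simp
        qed
        also have "\<dots> = B j \<tau>"
        proof -
          have "ennreal (2 * (2 ^ j) powr (-1/p)) * ennreal (2 * (\<Sum>i\<in>{j..k}. xx \<Omega> p f i)) = ennreal (c j)"
            by (subst ennreal_mult[symmetric]) (auto simp: c_def xx_def_G mult.assoc intro!: sum_nonneg)
          then show ?thesis using j by (simp add: B_def mult.assoc)
        qed
        also have "\<dots> \<le> (\<Sum>j<k. B j \<tau>)"
          using jk by (intro member_le_sum) auto
        also have "\<dots> \<le> A \<tau> + (\<Sum>j<k. B j \<tau>)" by simp
        finally show ?thesis .
      qed
    qed
  qed
  also have "\<dots> = (\<integral>\<^sup>+ \<tau>. A \<tau> \<partial>lborel) + (\<Sum>j<k. \<integral>\<^sup>+ \<tau>. B j \<tau> \<partial>lborel)"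
    unfolding A_def B_def by (subst nn_integral_add) (auto simp: nn_integral_sum)
  also have "(\<integral>\<^sup>+ \<tau>. A \<tau> \<partial>lborel) = ennreal (l * (tt k powr (1/p - 1 + 1) / (1/p - 1 + 1)))"
    unfolding A_def using p0 l0 tt_pos[of k] by (intro nn_int_powr) auto
  also have "l * (tt k powr (1/p - 1 + 1) / (1/p - 1 + 1)) = p * l * tt k powr (1/p)" by simp
  also have "(\<Sum>j<k. \<integral>\<^sup>+ \<tau>. B j \<tau> \<partial>lborel) = (\<Sum>j<k. ennreal (c j * (2 ^ j * ln 2)))"
  proof (rule sum.cong)
    fix j
    have "(\<integral>\<^sup>+ \<tau>. B j \<tau> \<partial>lborel) = ennreal (c j) * ennreal (ln (tt j) - ln (tt (Suc j)))"
      unfolding B_def by (subst nn_integral_cmult) (auto simp: nn_int_inv tt_pos tt_antimono)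
    also have "ln (tt j) - ln (tt (Suc j)) = 2 ^ j * ln 2" by (simp add: ln_tt algebra_simps)
    finally show "(\<integral>\<^sup>+ \<tau>. B j \<tau> \<partial>lborel) = ennreal (c j * (2 ^ j * ln 2))"
      using c0 by (simp add: ennreal_mult)
  qed simp
  also have "(\<Sum>j<k. ennreal (c j * (2 ^ j * ln 2))) = ennreal (\<Sum>j<k. c j * (2 ^ j * ln 2))"
    using c0 by (intro sum_ennreal) auto
  also have "ennreal (p * l * tt k powr (1/p)) + ennreal (\<Sum>j<k. c j * (2 ^ j * ln 2))
      = ennreal (p * l * tt k powr (1/p) + (\<Sum>j<k. c j * (2 ^ j * ln 2)))"
    using c0 l0 p0 by (intro ennreal_plus[symmetric] sum_nonneg) auto
  finally show ?thesis by (simp add: c_def l_def)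
qed

lemmas U1_G = U1[OF OmS Om1 p]
lemmas gA_meas_G = gA_meas[OF OmS Om1 p]
lemmas gB_meas_G = gB_meas[OF OmS Om1 p]
lemmas gA_def_G = gA_def[OF OmS Om1 p]
lemmas gB_def_G = gB_def[OF OmS Om1 p]

definition C2 :: real where "C2 = 2 * p + 4 * (2 powr (1 - 1/p) / (2 powr (1 - 1/p) - 1))"

lemma C2_pos: "0 < C2"
proof -
  have a: "1 < (2::real) powr (1 - 1/p)" using p by (intro gr_one_powr) auto
  then have "0 \<le> 4 * (2 powr (1 - 1/p) / (2 powr (1 - 1/p) - 1))" by simp
  then show ?thesis using p unfolding C2_def by linarith
qed

lemma U2':
  assumes fm: "f \<in> borel_measurable (lebesgue_on \<Omega>)"
  shows "small_norm \<Omega> p (gB \<Omega> f k) \<le> ennreal (C2 * (\<Sum>i\<le>k. (2 ^ i) powr (1 - 1/p) * xx \<Omega> p f i))"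
proof -
  have x0: "\<And>i. 0 \<le> xx \<Omega> p f i" by (simp add: xx_def_G)
  define l where "l = lam \<Omega> f k"
  have l0: "0 \<le> l" using lam_nonneg_G[OF fm] by (simp add: l_def)
  define Bs where "Bs = (\<Sum>i\<le>k. (2 ^ i) powr (1 - 1/p) * xx \<Omega> p f i)"
  have Bs0: "0 \<le> Bs" unfolding Bs_def using x0 by (intro sum_nonneg) auto
  have a: "l * tt k powr (1/p) \<le> 2 * Bs"
  proof -
    have "l * tt k powr (1/p) = (l powr p * tt k) powr (1/p)"
      using l0 tt_pos[of k] p by (simp add: powr_mult powr_powr)
    also have "\<dots> \<le> (2 * enn2real (bk \<Omega> p f k)) powr (1/p)"
      using lam_bound_G[OF fm, of k] tt_pos[of k] p by (intro powr_mono2) (auto simp: l_def)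
    also have "\<dots> = 2 powr (1/p) * xx \<Omega> p f k" by (simp add: powr_mult xx_def_G)
    also have "\<dots> \<le> 2 * xx \<Omega> p f k"
      using powr_mono[of "1/p" 1 2] p x0[of k] by (intro mult_right_mono) auto
    also have "xx \<Omega> p f k \<le> (2 ^ k) powr (1 - 1/p) * xx \<Omega> p f k"
      using x0[of k] p by (intro mult_left_le_one_le[THEN order.trans[OF _ order.refl]] | simp add: ge_one_powr_ge_zero mult_le_cancel_right1)+
    also have "(2 ^ k) powr (1 - 1/p) * xx \<Omega> p f k \<le> Bs"
      unfolding Bs_def using x0 by (intro member_le_sum[of k]) auto
    finally show ?thesis by simp
  qed
  have "small_norm \<Omega> p (gB \<Omega> f k) \<le> ennreal (p * l * tt k powr (1/p)
     + (\<Sum>j<k. 4 * (2 ^ j) powr (-1/p) * (\<Sum>i\<in>{j..k}. xx \<Omega> p f i) * (2 ^ j * ln 2)))"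
    using U2[OF fm] by (simp add: l_def)
  also have "\<dots> \<le> ennreal (2 * p * Bs + 4 * (2 powr (1 - 1/p) / (2 powr (1 - 1/p) - 1)) * Bs)"
  proof (rule ennreal_leI, rule add_mono)
    show "p * l * tt k powr (1/p) \<le> 2 * p * Bs" using a p by (simp add: mult.assoc mult_left_mono mult.left_commute)
    show "(\<Sum>j<k. 4 * (2 ^ j) powr (-1/p) * (\<Sum>i\<in>{j..k}. xx \<Omega> p f i) * (2 ^ j * ln 2))
      \<le> 4 * (2 powr (1 - 1/p) / (2 powr (1 - 1/p) - 1)) * Bs"
      unfolding Bs_def by (rule U2_core[OF x0 p])
  qed
  also have "2 * p * Bs + 4 * (2 powr (1 - 1/p) / (2 powr (1 - 1/p) - 1)) * Bs = C2 * Bs"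
    by (simp add: C2_def algebra_simps)
  finally show ?thesis by (simp add: Bs_def)
qed

definition Aser :: "('a \<Rightarrow> real) \<Rightarrow> nat \<Rightarrow> ennreal" where
  "Aser f k = (\<Sum>i. if k \<le> i then ennreal ((2 ^ i) powr (-1/p) * xx \<Omega> p f i) else 0)"

lemma K_upper:
  assumes fm: "f \<in> borel_measurable (lebesgue_on \<Omega>)" and Af: "Aser f k < top" and t: "0 \<le> t"
  shows "K_fun \<Omega> p f t \<le> 2 * Aser f k + ennreal (t * (C2 * (\<Sum>i\<le>k. (2 ^ i) powr (1 - 1/p) * xx \<Omega> p f i)))"
proof -
  define Bs where "Bs = (\<Sum>i\<le>k. (2 ^ i) powr (1 - 1/p) * xx \<Omega> p f i)"
  have Bs0: "0 \<le> Bs" unfolding Bs_def by (intro sum_nonneg) (simp add: xx_def_G)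
  have g1: "grand_norm \<Omega> p (gA \<Omega> f k) \<le> 2 * Aser f k" using U1_G[OF fm] by (simp add: Aser_def)
  have g2: "small_norm \<Omega> p (gB \<Omega> f k) \<le> ennreal (C2 * Bs)" using U2'[OF fm] by (simp add: Bs_def)
  have mem: "(gA \<Omega> f k, gB \<Omega> f k) \<in> {(g0, g1). g0 \<in> grand_space \<Omega> p \<and> g1 \<in> small_space \<Omega> p \<and>
        (\<forall>x\<in>\<Omega>. f x = g0 x + g1 x)}"
  proof (clarsimp, intro conjI)
    have "2 * Aser f k < top" using Af by (simp add: ennreal_mult_less_top)
    then show "gA \<Omega> f k \<in> grand_space \<Omega> p" using g1 gA_meas_G[OF fm]
      by (auto simp: grand_space_def intro: le_less_trans)
    show "gB \<Omega> f k \<in> small_space \<Omega> p" using g2 gB_meas_G[OF fm]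
      by (auto simp: small_space_def intro: le_less_trans)
    show "\<forall>x\<in>\<Omega>. f x = gA \<Omega> f k x + gB \<Omega> f k x" by (simp add: gA_def_G gB_def_G)
  qed
  have "K_fun \<Omega> p f t \<le> grand_norm \<Omega> p (gA \<Omega> f k) + ennreal t * small_norm \<Omega> p (gB \<Omega> f k)"
    unfolding K_fun_def using INF_lower[OF mem, of "\<lambda>gs. grand_norm \<Omega> p (fst gs) + ennreal t * small_norm \<Omega> p (snd gs)"]
    by simp
  also have "\<dots> \<le> 2 * Aser f k + ennreal t * ennreal (C2 * Bs)"
    by (intro add_mono mult_left_mono g1 g2) auto
  also have "ennreal t * ennreal (C2 * Bs) = ennreal (t * (C2 * Bs))"
    using t C2_pos Bs0 by (simp add: ennreal_mult)
  finally show ?thesis by (simp add: Bs_def)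
qed

end

lemma pw2: "((2::real) ^ n) powr a = 2 powr (real n * a)"
  by (simp add: powr_realpow[symmetric] powr_powr)

lemma pw3: "((2::real) powr a) ^ n = 2 powr (a * real n)"
  by (simp add: powr_realpow[symmetric] powr_powr)

lemma half_pow: "(1/2::real) ^ n = 2 powr (- real n)"
  by (simp add: powr_minus_divide powr_realpow power_divide)

lemma coefA:
  fixes \<theta> p x :: real
  assumes "k \<le> i"
  shows "(2 ^ k) powr \<theta> * ((2 ^ i) powr (-1/p) * x) = (2 powr (-\<theta>)) ^ (i - k) * ((2 ^ i) powr (\<theta> - 1/p) * x)"
proof -
  have "(2 ^ k) powr \<theta> * (2 ^ i) powr (-1/p) = (2::real) powr (real k * \<theta> + real i * (-1/p))"
    by (simp only: pw2 powr_add)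
  also have "real k * \<theta> + real i * (-1/p) = (-\<theta>) * real (i - k) + real i * (\<theta> - 1/p)"
    using assms by (simp add: of_nat_diff algebra_simps)
  also have "(2::real) powr \<dots> = (2 powr (-\<theta>)) ^ (i - k) * (2 ^ i) powr (\<theta> - 1/p)"
    by (simp only: pw2 pw3 powr_add)
  finally show ?thesis by (simp add: mult.assoc)
qed

lemma coefB:
  fixes \<theta> p x :: real
  assumes "i \<le> k"
  shows "(2 ^ k) powr \<theta> * (1/2) ^ k * ((2 ^ i) powr (1 - 1/p) * x) = (2 powr (\<theta> - 1)) ^ (k - i) * ((2 ^ i) powr (\<theta> - 1/p) * x)"
proof -
  have "(2 ^ k) powr \<theta> * (1/2) ^ k * (2 ^ i) powr (1 - 1/p) = (2::real) powr (real k * \<theta> + - real k + real i * (1 - 1/p))"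
    by (simp only: pw2 half_pow powr_add)
  also have "real k * \<theta> + - real k + real i * (1 - 1/p) = (\<theta> - 1) * real (k - i) + real i * (\<theta> - 1/p)"
    using assms by (simp add: of_nat_diff algebra_simps)
  also have "(2::real) powr \<dots> = (2 powr (\<theta> - 1)) ^ (k - i) * (2 ^ i) powr (\<theta> - 1/p)"
    by (simp only: pw2 pw3 powr_add)
  finally show ?thesis by (simp add: mult.assoc)
qed

lemma enn_powr_add_le:
  assumes r: "0 < r"
  shows "enn_powr (a + b) r \<le> ennreal (2 powr r) * (enn_powr a r + enn_powr b r)"
proof (cases a rule: enn_powr_cases)
  case top then show ?thesis by (simp add: ennreal_mult_top)
next
  case (fin x)
  show ?thesis
  proof (cases b rule: enn_powr_cases)
    case top then show ?thesis by (simp add: ennreal_mult_top)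
  next
    case fin2: (fin y)
    then show ?thesis using fin r powr_add_le2[of x y r]
      by (simp add: enn_powr_ennreal ennreal_mult[symmetric] ennreal_plus[symmetric] del: ennreal_plus)
  qed
qed

lemma z_le: fixes z r :: real assumes "0 \<le> z" "1 \<le> r" shows "z \<le> 1 + z powr r"
proof (cases "z \<le> 1")
  case False
  then have "z powr 1 \<le> z powr r" using assms by (intro powr_mono) auto
  then show ?thesis using False by simp
next
  case True
  have "0 \<le> z powr r" by simp
  then show ?thesis using True by linarith
qed

context
  fixes \<Omega> :: "'a::euclidean_space set" and p \<theta> r :: real
  assumes OmS: "\<Omega> \<in> sets lebesgue" and Om1: "emeasure lebesgue \<Omega> = 1" and p: "1 < p"
    and th: "0 < \<theta>" "\<theta> < 1" and r: "1 \<le> r"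
begin

lemmas zz_def_H = zz_def[OF OmS Om1 p th r]
lemmas xx_def_H = xx_def[OF OmS Om1 p]
lemmas Aser_def_H = Aser_def[OF OmS Om1 p]
lemmas K_upper_H = K_upper[OF OmS Om1 p]
lemmas C2_pos_H = C2_pos[OF OmS Om1 p]
lemmas interp_pow_H = interp_pow[OF OmS Om1 p th r]

lemma zz_xx: "zz \<Omega> p \<theta> f k = (2 ^ k) powr (\<theta> - 1/p) * xx \<Omega> p f k"
  by (simp add: zz_def_H xx_def_H)

lemma xx0: "0 \<le> xx \<Omega> p f k" by (simp add: xx_def_H)

lemma Aser_shift:
  "ennreal ((2 ^ k) powr \<theta>) * Aser \<Omega> p f k = (\<Sum>m. ennreal ((2 powr (-\<theta>)) ^ m) * ennreal (zz \<Omega> p \<theta> f (m + k)))"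
proof -
  define H where "H m = ennreal ((2 powr (-\<theta>)) ^ m) * ennreal (zz \<Omega> p \<theta> f (m + k))" for m
  have "ennreal ((2 ^ k) powr \<theta>) * Aser \<Omega> p f k
      = (\<Sum>i. ennreal ((2 ^ k) powr \<theta>) * (if k \<le> i then ennreal ((2 ^ i) powr (-1/p) * xx \<Omega> p f i) else 0))"
    unfolding Aser_def_H by (rule ennreal_suminf_cmult[symmetric])
  also have "\<dots> = (\<Sum>i. if k \<le> i then H (i - k) else 0)"
  proof (rule suminf_cong)
    fix i show "ennreal ((2 ^ k) powr \<theta>) * (if k \<le> i then ennreal ((2 ^ i) powr (-1/p) * xx \<Omega> p f i) else 0)
        = (if k \<le> i then H (i - k) else 0)"
    proof (cases "k \<le> i")
      case True
      have "ennreal ((2 ^ k) powr \<theta>) * ennreal ((2 ^ i) powr (-1/p) * xx \<Omega> p f i)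
          = ennreal ((2 ^ k) powr \<theta> * ((2 ^ i) powr (-1/p) * xx \<Omega> p f i))"
        by (rule ennreal_mult[symmetric]) (auto simp: xx0)
      also have "\<dots> = ennreal ((2 powr (-\<theta>)) ^ (i - k) * zz \<Omega> p \<theta> f i)"
        unfolding coefA[OF True, where \<theta>=\<theta> and p=p and x="xx \<Omega> p f i"] zz_xx by (rule refl)
      also have "\<dots> = H (i - k)" using True by (simp add: H_def ennreal_mult zz_def_H)
      finally show ?thesis using True by simp
    qed simp
  qed
  also have "\<dots> = (\<Sum>m. H m)" by (rule ennreal_suminf_shift_eq)
  finally show ?thesis by (simp add: H_def)
qed

lemma Bs_shift:
  "ennreal ((2 ^ k) powr \<theta> * (1/2) ^ k * (\<Sum>i\<le>k. (2 ^ i) powr (1 - 1/p) * xx \<Omega> p f i))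
    = (\<Sum>m. ennreal ((2 powr (\<theta> - 1)) ^ m) * (if m \<le> k then ennreal (zz \<Omega> p \<theta> f (k - m)) else 0))"
proof -
  define g where "g i = (2 powr (\<theta> - 1)) ^ (k - i) * zz \<Omega> p \<theta> f i" for i
  have g0: "0 \<le> g i" for i by (simp add: g_def zz_def_H)
  have "(2 ^ k) powr \<theta> * (1/2) ^ k * (\<Sum>i\<le>k. (2 ^ i) powr (1 - 1/p) * xx \<Omega> p f i) = (\<Sum>i\<le>k. g i)"
    unfolding sum_distrib_left
  proof (rule sum.cong)
    fix i assume "i \<in> {..k}"
    then show "(2 ^ k) powr \<theta> * (1/2) ^ k * ((2 ^ i) powr (1 - 1/p) * xx \<Omega> p f i) = g i"
      using coefB[of i k \<theta> p "xx \<Omega> p f i"] by (simp add: g_def zz_xx)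
  qed simp
  also have "\<dots> = (\<Sum>i<Suc k. g (Suc k - Suc i))"
    unfolding lessThan_Suc_atMost[symmetric] by (rule sum.nat_diff_reindex[symmetric])
  also have "\<dots> = (\<Sum>m\<le>k. (2 powr (\<theta> - 1)) ^ m * zz \<Omega> p \<theta> f (k - m))"
    unfolding lessThan_Suc_atMost by (rule sum.cong) (auto simp: g_def)
  finally have e: "ennreal ((2 ^ k) powr \<theta> * (1/2) ^ k * (\<Sum>i\<le>k. (2 ^ i) powr (1 - 1/p) * xx \<Omega> p f i))
      = (\<Sum>m\<le>k. ennreal ((2 powr (\<theta> - 1)) ^ m) * ennreal (zz \<Omega> p \<theta> f (k - m)))"
    by (simp add: zz_def_H ennreal_mult sum_ennreal[symmetric] del: sum_ennreal)
  have "(\<Sum>m. ennreal ((2 powr (\<theta> - 1)) ^ m) * (if m \<le> k then ennreal (zz \<Omega> p \<theta> f (k - m)) else 0))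
      = (\<Sum>m\<in>{..k}. ennreal ((2 powr (\<theta> - 1)) ^ m) * (if m \<le> k then ennreal (zz \<Omega> p \<theta> f (k - m)) else 0))"
    by (rule suminf_finite) auto
  then show ?thesis unfolding e by simp
qed

lemma alpha_props: "0 \<le> (2::real) powr (-\<theta>)" "(2::real) powr (-\<theta>) < 1"
  "0 \<le> (2::real) powr (\<theta> - 1)" "(2::real) powr (\<theta> - 1) < 1"
  using th by (auto intro!: powr_less_one)

lemma Aser_fin:
  assumes S: "(\<Sum>k. ennreal (zz \<Omega> p \<theta> f k powr r)) < top"
  shows "Aser \<Omega> p f k < top"
proof -
  define a where "a = (2::real) powr (-\<theta>)"
  have a: "0 \<le> a" "a < 1" using alpha_props by (auto simp: a_def)
  have "Aser \<Omega> p f k \<le> (\<Sum>i. ennreal (a ^ i) + ennreal (zz \<Omega> p \<theta> f i powr r))"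
    unfolding Aser_def_H
  proof (intro suminf_le summableI)
    fix i
    have e: "(2 ^ i) powr (-1/p) * xx \<Omega> p f i = a ^ i * zz \<Omega> p \<theta> f i"
      using coefA[of 0 i \<theta> p "xx \<Omega> p f i"] by (simp add: a_def zz_xx)
    have z0: "0 \<le> zz \<Omega> p \<theta> f i" by (simp add: zz_def_H)
    have "a ^ i * zz \<Omega> p \<theta> f i \<le> a ^ i * (1 + zz \<Omega> p \<theta> f i powr r)"
      using z_le[OF z0 r] a by (intro mult_left_mono) auto
    also have "\<dots> \<le> a ^ i + zz \<Omega> p \<theta> f i powr r"
    proof -
      have "a ^ i \<le> 1" using a by (simp add: power_le_one)
      then have "a ^ i * zz \<Omega> p \<theta> f i powr r \<le> zz \<Omega> p \<theta> f i powr r"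
        using mult_right_mono[OF \<open>a ^ i \<le> 1\<close>, of "zz \<Omega> p \<theta> f i powr r"] by simp
      then show ?thesis by (simp add: distrib_left)
    qed
    finally have "(2 ^ i) powr (-1/p) * xx \<Omega> p f i \<le> a ^ i + zz \<Omega> p \<theta> f i powr r" using e by simp
    then have "ennreal ((2 ^ i) powr (-1/p) * xx \<Omega> p f i) \<le> ennreal (a ^ i) + ennreal (zz \<Omega> p \<theta> f i powr r)"
      using a by (simp add: ennreal_plus[symmetric] del: ennreal_plus)
    then show "(if k \<le> i then ennreal ((2 ^ i) powr (-1/p) * xx \<Omega> p f i) else 0)
        \<le> ennreal (a ^ i) + ennreal (zz \<Omega> p \<theta> f i powr r)" by auto
  qed
  also have "\<dots> = (\<Sum>i. ennreal (a ^ i)) + (\<Sum>i. ennreal (zz \<Omega> p \<theta> f i powr r))"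
    by (rule suminf_add[symmetric]) auto
  also have "\<dots> < top" using S ennreal_geom[OF a] by simp
  finally show ?thesis .
qed

definition Bsum :: "('a \<Rightarrow> real) \<Rightarrow> nat \<Rightarrow> real" where
  "Bsum f k = (\<Sum>i\<le>k. (2 ^ i) powr (1 - 1/p) * xx \<Omega> p f i)"

lemma Bsum0: "0 \<le> Bsum f k" unfolding Bsum_def by (intro sum_nonneg) (simp add: xx0)

lemma phi_bound:
  assumes fm: "f \<in> borel_measurable (lebesgue_on \<Omega>)" and Af: "Aser \<Omega> p f k < top"
    and t: "t \<in> JC k" "0 < t" "t < 1"
  shows "enn_powr (ennreal (t powr (-\<theta>)) * K_fun \<Omega> p f t) r * ennreal (1 / t)
    \<le> ennreal (2 powr (\<theta> * r)) * enn_powr (2 * (ennreal ((2 ^ k) powr \<theta>) * Aser \<Omega> p f k)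
        + ennreal (C2 p) * ennreal ((2 ^ k) powr \<theta> * (1/2) ^ k * Bsum f k)) r * ennreal (2 ^ Suc k)"
proof -
  have r0: "0 < r" using r by simp
  have tk: "(1/2) ^ Suc k \<le> t" "t \<le> (1/2) ^ k" using t by (auto simp: JC_def)
  define c where "c = (2 ^ k) powr \<theta>"
  have c0: "0 \<le> c" by (simp add: c_def)
  have C20: "0 \<le> C2 p" using C2_pos_H by simp
  have "K_fun \<Omega> p f t \<le> 2 * Aser \<Omega> p f k + ennreal (t * (C2 p * Bsum f k))"
    using K_upper_H[OF fm Af, of t] t by (simp add: Bsum_def)
  also have "\<dots> \<le> 2 * Aser \<Omega> p f k + ennreal ((1/2) ^ k * (C2 p * Bsum f k))"
    using tk C20 Bsum0 by (intro add_left_mono ennreal_leI mult_right_mono) auto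
  finally have K: "K_fun \<Omega> p f t \<le> 2 * Aser \<Omega> p f k + ennreal ((1/2) ^ k * (C2 p * Bsum f k))" .
  have "t powr (-\<theta>) \<le> ((1/2) ^ Suc k) powr (-\<theta>)"
    using powr_mono2'[of "-\<theta>" "(1/2)^Suc k" t] tk th by simp
  also have "\<dots> = (2 ^ Suc k) powr \<theta>" by (rule half_pow_powr)
  also have "\<dots> = 2 powr \<theta> * c" by (simp add: c_def powr_mult)
  finally have T: "t powr (-\<theta>) \<le> 2 powr \<theta> * c" .
  have "ennreal (t powr (-\<theta>)) * K_fun \<Omega> p f t
      \<le> ennreal (2 powr \<theta> * c) * (2 * Aser \<Omega> p f k + ennreal ((1/2) ^ k * (C2 p * Bsum f k)))"
    by (intro mult_mono ennreal_leI T K) auto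
  also have "\<dots> = ennreal (2 powr \<theta>) * (2 * (ennreal c * Aser \<Omega> p f k) + ennreal (C2 p) * ennreal (c * (1/2) ^ k * Bsum f k))"
  proof -
    have e1: "ennreal (2 powr \<theta> * c) = ennreal (2 powr \<theta>) * ennreal c" using c0 by (simp add: ennreal_mult)
    have e2: "ennreal c * ennreal ((1/2) ^ k * (C2 p * Bsum f k)) = ennreal (C2 p) * ennreal (c * (1/2) ^ k * Bsum f k)"
      using c0 C20 Bsum0 by (simp add: ennreal_mult[symmetric] mult_ac)
    have e3: "ennreal c * (2 * Aser \<Omega> p f k + ennreal ((1/2) ^ k * (C2 p * Bsum f k)))
        = 2 * (ennreal c * Aser \<Omega> p f k) + ennreal c * ennreal ((1/2) ^ k * (C2 p * Bsum f k))"
      by (simp only: distrib_left mult.left_commute)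
    show ?thesis unfolding e1 by (simp only: mult.assoc e3 e2)
  qed
  finally have P: "ennreal (t powr (-\<theta>)) * K_fun \<Omega> p f t
      \<le> ennreal (2 powr \<theta>) * (2 * (ennreal c * Aser \<Omega> p f k) + ennreal (C2 p) * ennreal (c * (1/2) ^ k * Bsum f k))" .
  have "enn_powr (ennreal (t powr (-\<theta>)) * K_fun \<Omega> p f t) r
      \<le> enn_powr (ennreal (2 powr \<theta>) * (2 * (ennreal c * Aser \<Omega> p f k) + ennreal (C2 p) * ennreal (c * (1/2) ^ k * Bsum f k))) r"
    by (rule enn_powr_mono[OF r0 P])
  also have "\<dots> = ennreal (2 powr (\<theta> * r)) * enn_powr (2 * (ennreal c * Aser \<Omega> p f k) + ennreal (C2 p) * ennreal (c * (1/2) ^ k * Bsum f k)) r"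
    using r0 by (simp add: enn_powr_mult enn_powr_ennreal powr_powr)
  finally have L: "enn_powr (ennreal (t powr (-\<theta>)) * K_fun \<Omega> p f t) r \<le> \<dots>" .
  have "ennreal (1 / t) \<le> ennreal (2 ^ Suc k)"
  proof (rule ennreal_leI)
    have "1 = 2 ^ Suc k * (1/2::real) ^ Suc k" by (simp add: power_mult_distrib[symmetric])
    also have "\<dots> \<le> 2 ^ Suc k * t" using tk by (intro mult_left_mono) auto
    finally show "1 / t \<le> 2 ^ Suc k" using t by (simp add: field_simps)
  qed
  then show ?thesis using L unfolding c_def by (intro mult_mono) auto
qed

definition Hc :: "real \<Rightarrow> real" where
  "Hc c = (1 / (1 - sqrt c)) powr r * (1 / (1 - sqrt c powr r))"

definition C0 :: real where
  "C0 = 2 powr (\<theta> * r) * 2 powr r * (2 powr r * Hc (2 powr (-\<theta>)) + C2 p powr r * Hc (2 powr (\<theta> - 1)))"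

lemma Hc_pos: assumes "0 \<le> c" "c < 1" shows "0 < Hc c"
proof -
  have s: "sqrt c < 1" using assms by simp
  have "sqrt c powr r < 1"
  proof (cases "c = 0")
    case False
    then have "sqrt c powr r \<le> sqrt c" using assms s r by (intro powr_le_one_le) auto
    then show ?thesis using s by linarith
  qed simp
  then show ?thesis using s by (simp add: Hc_def)
qed

lemma C0_pos: "0 < C0"
  unfolding C0_def using Hc_pos alpha_props C2_pos_H by (intro mult_pos_pos add_pos_pos) auto

lemma upper_main:
  assumes f: "f \<in> interp_space \<Omega> p \<theta> r"
  shows "enn_powr (interp_norm \<Omega> p \<theta> r f) r \<le> ennreal C0 * (\<Sum>k. ennreal (zz \<Omega> p \<theta> f k powr r))"
proof (cases "(\<Sum>k. ennreal (zz \<Omega> p \<theta> f k powr r)) < top")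
  case False
  then have "(\<Sum>k. ennreal (zz \<Omega> p \<theta> f k powr r)) = top" using top.not_eq_extremum by blast
  then show ?thesis using C0_pos by (simp add: ennreal_mult_top)
next
  case True
  define Sx where "Sx = (\<Sum>k. ennreal (zz \<Omega> p \<theta> f k powr r))"
  have r0: "0 < r" using r by simp
  have fm: "f \<in> borel_measurable (lebesgue_on \<Omega>)"
    using f sum_meas by (auto simp: interp_space_def)
  have Af: "Aser \<Omega> p f k < top" for k using Aser_fin[OF True] .
  define X where "X k = ennreal ((2 ^ k) powr \<theta>) * Aser \<Omega> p f k" for k
  define Y where "Y k = ennreal ((2 ^ k) powr \<theta> * (1/2) ^ k * Bsum f k)" for k
  define K0 where "K0 = ennreal (2 powr (\<theta> * r)) * ennreal (2 powr r)"
  have SX: "(\<Sum>k. enn_powr (X k) r) \<le> ennreal (Hc (2 powr (-\<theta>))) * Sx"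
  proof -
    have "(\<Sum>k. enn_powr (X k) r) = (\<Sum>k. enn_powr (\<Sum>m. ennreal ((2 powr (-\<theta>)) ^ m) * ennreal (zz \<Omega> p \<theta> f (m + k))) r)"
      by (simp add: X_def Aser_shift)
    also have "\<dots> \<le> ennreal (Hc (2 powr (-\<theta>))) * Sx"
      unfolding Hc_def
    proof (rule discrete_hardy[OF alpha_props(1,2) r])
      fix m
      have "(\<Sum>k. enn_powr (ennreal (zz \<Omega> p \<theta> f (m + k))) r) = (\<Sum>k. ennreal (zz \<Omega> p \<theta> f (k + m) powr r))"
        by (simp add: enn_powr_ennreal zz_def_H add.commute)
      also have "\<dots> \<le> Sx" unfolding Sx_def by (rule ennreal_suminf_shift_le[of "\<lambda>k. ennreal (zz \<Omega> p \<theta> f k powr r)"])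
      finally show "(\<Sum>k. enn_powr (ennreal (zz \<Omega> p \<theta> f (m + k))) r) \<le> Sx" .
    qed
    finally show ?thesis .
  qed
  have SY: "(\<Sum>k. enn_powr (Y k) r) \<le> ennreal (Hc (2 powr (\<theta> - 1))) * Sx"
  proof -
    have "(\<Sum>k. enn_powr (Y k) r) = (\<Sum>k. enn_powr (\<Sum>m. ennreal ((2 powr (\<theta> - 1)) ^ m) * (if m \<le> k then ennreal (zz \<Omega> p \<theta> f (k - m)) else 0)) r)"
      by (simp add: Y_def Bs_shift Bsum_def)
    also have "\<dots> \<le> ennreal (Hc (2 powr (\<theta> - 1))) * Sx"
      unfolding Hc_def
    proof (rule discrete_hardy[OF alpha_props(3,4) r])
      fix m
      have "(\<Sum>k. enn_powr (if m \<le> k then ennreal (zz \<Omega> p \<theta> f (k - m)) else 0) r)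
          = (\<Sum>k. if m \<le> k then ennreal (zz \<Omega> p \<theta> f (k - m) powr r) else 0)"
        by (rule suminf_cong) (simp add: enn_powr_ennreal zz_def_H r0)
      also have "\<dots> = Sx" unfolding Sx_def by (rule ennreal_suminf_shift_eq)
      finally show "(\<Sum>k. enn_powr (if m \<le> k then ennreal (zz \<Omega> p \<theta> f (k - m)) else 0) r) \<le> Sx" by simp
    qed
    finally show ?thesis .
  qed
  have "enn_powr (interp_norm \<Omega> p \<theta> r f) r
      = (\<integral>\<^sup>+ t. enn_powr (ennreal (t powr (-\<theta>)) * K_fun \<Omega> p f t) r * ennreal (1 / t) * indicator {0<..<1} t \<partial>lborel)"
    by (simp add: interp_pow_H)
  also have "\<dots> \<le> (\<Sum>k. (ennreal (2 powr (\<theta> * r)) * enn_powr (2 * X k + ennreal (C2 p) * Y k) r * ennreal (2 ^ Suc k))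
        * ennreal ((1/2) ^ Suc k))"
    by (rule interval_majorant) (use phi_bound[OF fm Af] in \<open>simp add: X_def Y_def\<close>)
  also have "\<dots> = (\<Sum>k. ennreal (2 powr (\<theta> * r)) * enn_powr (2 * X k + ennreal (C2 p) * Y k) r)"
  proof (rule suminf_cong)
    fix k
    have "ennreal (2 ^ Suc k) * ennreal ((1/2) ^ Suc k) = 1"
      by (simp add: ennreal_mult[symmetric] power_mult_distrib[symmetric])
    then show "ennreal (2 powr (\<theta> * r)) * enn_powr (2 * X k + ennreal (C2 p) * Y k) r * ennreal (2 ^ Suc k) * ennreal ((1/2) ^ Suc k)
      = ennreal (2 powr (\<theta> * r)) * enn_powr (2 * X k + ennreal (C2 p) * Y k) r" by (simp add: mult.assoc)
  qed
  also have "\<dots> \<le> (\<Sum>k. K0 * (ennreal (2 powr r) * enn_powr (X k) r + ennreal (C2 p powr r) * enn_powr (Y k) r))"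
  proof (intro suminf_le summableI)
    fix k
    have "enn_powr (2 * X k + ennreal (C2 p) * Y k) r \<le> ennreal (2 powr r) * (enn_powr (2 * X k) r + enn_powr (ennreal (C2 p) * Y k) r)"
      by (rule enn_powr_add_le[OF r0])
    also have "enn_powr (2 * X k) r = ennreal (2 powr r) * enn_powr (X k) r"
    proof -
      have "enn_powr 2 r = ennreal (2 powr r)" using enn_powr_ennreal[of 2 r] by simp
      then show ?thesis using enn_powr_mult[OF r0, of 2 "X k"] by simp
    qed
    also have "enn_powr (ennreal (C2 p) * Y k) r = ennreal (C2 p powr r) * enn_powr (Y k) r"
      using C2_pos_H by (simp add: enn_powr_mult[OF r0] enn_powr_ennreal)
    finally show "ennreal (2 powr (\<theta> * r)) * enn_powr (2 * X k + ennreal (C2 p) * Y k) r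
        \<le> K0 * (ennreal (2 powr r) * enn_powr (X k) r + ennreal (C2 p powr r) * enn_powr (Y k) r)"
      unfolding K0_def by (simp add: mult.assoc mult_left_mono)
  qed
  also have "\<dots> = K0 * (ennreal (2 powr r) * (\<Sum>k. enn_powr (X k) r) + ennreal (C2 p powr r) * (\<Sum>k. enn_powr (Y k) r))"
    by (simp add: suminf_add[symmetric])
  also have "\<dots> \<le> K0 * (ennreal (2 powr r) * (ennreal (Hc (2 powr (-\<theta>))) * Sx) + ennreal (C2 p powr r) * (ennreal (Hc (2 powr (\<theta> - 1))) * Sx))"
    by (intro mult_left_mono add_mono SX SY) auto
  also have "K0 * (ennreal (2 powr r) * (ennreal (Hc (2 powr (-\<theta>))) * Sx) + ennreal (C2 p powr r) * (ennreal (Hc (2 powr (\<theta> - 1))) * Sx))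
      = ennreal C0 * Sx"
  proof -
    have h: "0 \<le> Hc (2 powr (-\<theta>))" "0 \<le> Hc (2 powr (\<theta> - 1))"
      using Hc_pos alpha_props by (auto intro: less_imp_le)
    have "ennreal C0 = K0 * (ennreal (2 powr r) * ennreal (Hc (2 powr (-\<theta>))) + ennreal (C2 p powr r) * ennreal (Hc (2 powr (\<theta> - 1))))"
    proof -
      have a: "ennreal (2 powr r * Hc (2 powr (-\<theta>)) + C2 p powr r * Hc (2 powr (\<theta> - 1)))
          = ennreal (2 powr r) * ennreal (Hc (2 powr (-\<theta>))) + ennreal (C2 p powr r) * ennreal (Hc (2 powr (\<theta> - 1)))"
        using h by (simp add: ennreal_plus ennreal_mult)
      have "ennreal C0 = ennreal (2 powr (\<theta> * r) * 2 powr r) * ennreal (2 powr r * Hc (2 powr (-\<theta>)) + C2 p powr r * Hc (2 powr (\<theta> - 1)))"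
        unfolding C0_def by (rule ennreal_mult) (use h in auto)
      also have "ennreal (2 powr (\<theta> * r) * 2 powr r) = ennreal (2 powr (\<theta> * r)) * ennreal (2 powr r)"
        by (rule ennreal_mult) auto
      finally show ?thesis unfolding a K0_def .
    qed
    then show ?thesis by (simp add: distrib_left distrib_right mult.assoc)
  qed
  finally show ?thesis by (simp add: Sx_def)
qed

end

theorem corollary6p1:
  fixes \<Omega> :: "'a::euclidean_space set" and p \<theta> r :: real
  assumes "open \<Omega>" "bounded \<Omega>" "emeasure lebesgue \<Omega> = 1"
    and "1 < p" "0 < \<theta>" "\<theta> < 1" "1 \<le> r"
  defines "tk \<equiv> (\<lambda>k::nat. (2::real) powr (1 - 2 ^ k))"
  shows "\<exists>c C. 0 < c \<and> 0 < C \<and> (\<forall>f \<in> interp_space \<Omega> p \<theta> r.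
     (let S = (\<Sum>k. ennreal (2 powr (real k * r * (\<theta> - 1/p))) *
                enn_powr (\<integral>\<^sup>+ s\<in>{tk (Suc k)..tk k}. ennreal (dec_rearr \<Omega> f s powr p) \<partial>lborel) (r/p))
      in ennreal c * S \<le> enn_powr (interp_norm \<Omega> p \<theta> r f) r \<and>
         enn_powr (interp_norm \<Omega> p \<theta> r f) r \<le> ennreal C * S))"
proof -
  have OmS: "\<Omega> \<in> sets lebesgue" using lmeasurable_open[OF assms(2,1)] by (simp add: fmeasurableD)
  note Om1 = assms(3)
  note p = assms(4)
  note th = assms(5,6)
  note r = assms(7)
  have tk: "tk = tt" by (rule ext) (simp add: tk_def tt_def)
  have S_eq: "(\<Sum>k. ennreal (2 powr (real k * r * (\<theta> - 1/p))) *
                enn_powr (\<integral>\<^sup>+ s\<in>{tk (Suc k)..tk k}. ennreal (dec_rearr \<Omega> f s powr p) \<partial>lborel) (r/p))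
      = (\<Sum>k. ennreal (zz \<Omega> p \<theta> f k powr r))" if f: "f \<in> interp_space \<Omega> p \<theta> r" for f
  proof -
    have fm: "f \<in> borel_measurable (lebesgue_on \<Omega>)" using f sum_meas by (auto simp: interp_space_def)
    show ?thesis unfolding tk bk_def[OF OmS Om1 p, symmetric]
      using S_term[OF OmS Om1 p th r fm] by simp
  qed
  show ?thesis
  proof (intro exI conjI ballI)
    show "0 < 48 powr (-r) / (2::real)" by simp
    show "0 < C0 p \<theta> r" by (rule C0_pos[OF OmS Om1 p th r])
    fix f assume f: "f \<in> interp_space \<Omega> p \<theta> r"
    show "let S = (\<Sum>k. ennreal (2 powr (real k * r * (\<theta> - 1/p))) *
                enn_powr (\<integral>\<^sup>+ s\<in>{tk (Suc k)..tk k}. ennreal (dec_rearr \<Omega> f s powr p) \<partial>lborel) (r/p))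
      in ennreal (48 powr (-r) / 2) * S \<le> enn_powr (interp_norm \<Omega> p \<theta> r f) r \<and>
         enn_powr (interp_norm \<Omega> p \<theta> r f) r \<le> ennreal (C0 p \<theta> r) * S"
      unfolding Let_def S_eq[OF f]
      using lower_main[OF OmS Om1 p th r f] upper_main[OF OmS Om1 p th r f] by simp
  qed
qed


end
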